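(* Fix a node $p$ with $N_p\ge 1$ neighbors, integers $d\ge1$, $B_p\ge1$, constants $C^R>0$, $\rho>0$, $\eta>0$, a privacy parameter $\alpha>0$, and fixed vectors $\lambda\in\mathbb{R}^d$, $f_p(t)\in\mathbb{R}^d$ and $f_i(t)\in\mathbb{R}^d$ for $i\in\mathcal{N}_p$ (these do not depend on the dataset). Given a dataset $D_p=((x_j,y_j))_{j=1}^{B_p}$, the dual variable perturbation step is: (i) set $\hat\alpha=\alpha-2\ln\!\Big(1+\frac{c_1C^R}{B_p(\rho+2\eta N_p)}\Big)$; if $\hat\alpha>0$ set $\Phi=0$; otherwise set $\Phi=\frac{c_1C^R}{B_p(e^{\alpha/4}-1)}-\rho-2\eta N_p$ and redefine $\hat\alpha=\alpha/2$; (ii) draw $\epsilon\in\mathbb{R}^d$ with density proportional to $e^{-(\hat\alpha/2)\|\epsilon\|}$ and set $\mu=\lambda+\frac{C^R}{2B_p}\epsilon$; (iii) output $$f_p(t+1)=\arg\min_{f\in\mathbb{R}^d}\ \frac{C^R}{B_p}\sum_{j=1}^{B_p}\mathcal{L}(y_jf^Tx_j)+\rho R(f)+2\mu^Tf+\frac{\Phi}{2}\|f\|^2+\eta\sum_{i\in\mathcal{N}_p}\Big\|f-\tfrac12\big(f_p(t)+f_i(t)\big)\Big\|^2 .$$ Then for any two neighboring datasets $D_p,D_p'$, the output $f_p(t+1)$ has a density under each, denoted $Q(\cdot\mid D_p)$ and $Q(\cdot\mid D_p')$, and for every $f\in\mathbb{R}^d$, $$\frac{Q(f\mid D_p)}{Q(f\mid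 D_p')}\le e^{\alpha}.$$
   Context: Data points satisfy $x_j\in\mathbb{R}^d$ with $\|x_j\|\le 1$ (Euclidean norm) and $y_j\in\{-1,1\}$. The loss $\mathcal{L}:\mathbb{R}\to\mathbb{R}$ is strictly convex and twice continuously differentiable with $|\mathcal{L}'|\le 1$ and $|\mathcal{L}''|\le c_1$ for a constant $c_1>0$. The regularizer $R:\mathbb{R}^d\to\mathbb{R}$ is twice continuously differentiable and 1-strongly convex. Two datasets of the same size $B_p$ are neighboring if they differ in exactly one data point. $\|\cdot\|$ is the Euclidean norm. *)

theory Defs
  imports "HOL-Analysis.Analysis"
begin

definition strictly_convex :: "(real \<Rightarrow> real) \<Rightarrow> bool" where
  "strictly_convex L \<longleftrightarrow>
     (\<forall>x y t. x \<noteq> y \<longrightarrow> 0 < t \<longrightarrow> t < 1 \<longrightarrow>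
        L ((1 - t) * x + t * y) < (1 - t) * L x + t * L y)"

definition strongly_convex :: "real \<Rightarrow> ('d::real_normed_vector \<Rightarrow> real) \<Rightarrow> bool" where
  "strongly_convex m R \<longleftrightarrow>
     (\<forall>x y t. 0 \<le> t \<longrightarrow> t \<le> 1 \<longrightarrow>
        R ((1 - t) *\<^sub>R x + t *\<^sub>R y)
          \<le> (1 - t) * R x + t * R y - (m / 2) * t * (1 - t) * (norm (x - y))\<^sup>2)"

definition C2_real :: "(real \<Rightarrow> real) \<Rightarrow> bool" where
  "C2_real L \<longleftrightarrow> (\<exists>L1 L2. (\<forall>t. (L has_real_derivative L1 t) (at t))
      \<and> (\<forall>t. (L1 has_real_derivative L2 t) (at t)) \<and> continuous_on UNIV L2)"

definition C2_fun :: "('d::euclidean_space \<Rightarrow> real) \<Rightarrow> bool" where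
  "C2_fun R \<longleftrightarrow> (\<exists>(D1::'d \<Rightarrow> ('d \<Rightarrow>\<^sub>L real)) (D2::'d \<Rightarrow> ('d \<Rightarrow>\<^sub>L ('d \<Rightarrow>\<^sub>L real))).
      (\<forall>x. (R has_derivative blinfun_apply (D1 x)) (at x))
    \<and> (\<forall>x. (D1 has_derivative blinfun_apply (D2 x)) (at x))
    \<and> continuous_on UNIV D2)"

definition alpha_hat0 :: "real \<Rightarrow> real \<Rightarrow> real \<Rightarrow> nat \<Rightarrow> real \<Rightarrow> real \<Rightarrow> nat \<Rightarrow> real" where
  "alpha_hat0 \<alpha> c1 CR B \<rho> \<eta> N =
     \<alpha> - 2 * ln (1 + c1 * CR / (real B * (\<rho> + 2 * \<eta> * real N)))"

definition alpha_hat :: "real \<Rightarrow> real \<Rightarrow> real \<Rightarrow> nat \<Rightarrow> real \<Rightarrow> real \<Rightarrow> nat \<Rightarrow> real" where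
  "alpha_hat \<alpha> c1 CR B \<rho> \<eta> N =
     (if alpha_hat0 \<alpha> c1 CR B \<rho> \<eta> N > 0 then alpha_hat0 \<alpha> c1 CR B \<rho> \<eta> N else \<alpha> / 2)"

definition Phi :: "real \<Rightarrow> real \<Rightarrow> real \<Rightarrow> nat \<Rightarrow> real \<Rightarrow> real \<Rightarrow> nat \<Rightarrow> real" where
  "Phi \<alpha> c1 CR B \<rho> \<eta> N =
     (if alpha_hat0 \<alpha> c1 CR B \<rho> \<eta> N > 0 then 0
      else c1 * CR / (real B * (exp (\<alpha> / 4) - 1)) - \<rho> - 2 * \<eta> * real N)"

definition noise_measure :: "real \<Rightarrow> 'd::euclidean_space measure" where
  "noise_measure a =
     density lborel (\<lambda>e. ennreal (exp (- (a / 2) * norm e)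
        / (\<integral>(u::'d). exp (- (a / 2) * norm u) \<partial>lborel)))"

definition objective ::
  "(real \<Rightarrow> real) \<Rightarrow> ('d::euclidean_space \<Rightarrow> real) \<Rightarrow> real \<Rightarrow> nat \<Rightarrow> real \<Rightarrow> real \<Rightarrow> real
   \<Rightarrow> 'n set \<Rightarrow> 'd \<Rightarrow> ('n \<Rightarrow> 'd) \<Rightarrow> (nat \<Rightarrow> 'd) \<Rightarrow> (nat \<Rightarrow> real) \<Rightarrow> 'd \<Rightarrow> 'd \<Rightarrow> real" where
  "objective L R CR B \<rho> \<eta> \<Phi> Np fp fn x y \<mu> f =
     CR / real B * (\<Sum>j<B. L (y j * (f \<bullet> x j))) + \<rho> * R f + 2 * (\<mu> \<bullet> f)
     + \<Phi> / 2 * (norm f)\<^sup>2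
     + \<eta> * (\<Sum>i\<in>Np. (norm (f - (1/2) *\<^sub>R (fp + fn i)))\<^sup>2)"

definition mechanism_output ::
  "(real \<Rightarrow> real) \<Rightarrow> ('d::euclidean_space \<Rightarrow> real) \<Rightarrow> real \<Rightarrow> real \<Rightarrow> real \<Rightarrow> nat \<Rightarrow> real \<Rightarrow> real
   \<Rightarrow> 'n set \<Rightarrow> 'd \<Rightarrow> 'd \<Rightarrow> ('n \<Rightarrow> 'd) \<Rightarrow> (nat \<Rightarrow> 'd) \<Rightarrow> (nat \<Rightarrow> real) \<Rightarrow> 'd \<Rightarrow> 'd" where
  "mechanism_output L R c1 \<alpha> CR B \<rho> \<eta> Np lam fp fn x y \<epsilon> =
     (let \<Phi> = Phi \<alpha> c1 CR B \<rho> \<eta> (card Np);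
          \<mu> = lam + (CR / (2 * real B)) *\<^sub>R \<epsilon>
      in arg_min (objective L R CR B \<rho> \<eta> \<Phi> Np fp fn x y \<mu>) (\<lambda>_. True))"

definition output_distribution ::
  "(real \<Rightarrow> real) \<Rightarrow> ('d::euclidean_space \<Rightarrow> real) \<Rightarrow> real \<Rightarrow> real \<Rightarrow> real \<Rightarrow> nat \<Rightarrow> real \<Rightarrow> real
   \<Rightarrow> 'n set \<Rightarrow> 'd \<Rightarrow> 'd \<Rightarrow> ('n \<Rightarrow> 'd) \<Rightarrow> (nat \<Rightarrow> 'd) \<Rightarrow> (nat \<Rightarrow> real) \<Rightarrow> 'd measure" where
  "output_distribution L R c1 \<alpha> CR B \<rho> \<eta> Np lam fp fn x y =
     distr (noise_measure (alpha_hat \<alpha> c1 CR B \<rho> \<eta> (card Np))) lborel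
       (mechanism_output L R c1 \<alpha> CR B \<rho> \<eta> Np lam fp fn x y)"

definition neighboring :: "nat \<Rightarrow> (nat \<Rightarrow> 'd) \<Rightarrow> (nat \<Rightarrow> real) \<Rightarrow> (nat \<Rightarrow> 'd) \<Rightarrow> (nat \<Rightarrow> real) \<Rightarrow> bool" where
  "neighboring B x y x' y' \<longleftrightarrow> card {j. j < B \<and> (x j, y j) \<noteq> (x' j, y' j)} = 1"

end

theory Submission
  imports Defs
begin

lemma det_two_prop_rows_zero:
  fixes A :: "real^'n^'n"
  assumes ik: "i \<noteq> k" and ri: "row i A = c *s u" and rk: "row k A = d *s u"
  shows "det A = 0"
proof (cases "c = 0")
  case True
  then have "row i A = 0" using ri by simp
  then show ?thesis by (rule det_zero_row)
next
  case False
  let ?B = "(\<chi> m. if m = k then row k A + (- (d / c)) *s row i A else row m A) :: real^'n^'n"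
  have "det ?B = det A" using det_row_operation[of k i A "- (d/c)"] ik by simp
  moreover have "row k ?B = 0"
    using ri rk False by (simp add: row_def vec_eq_iff) 
  then have "det ?B = 0" by (rule det_zero_row)
  ultimately show ?thesis by simp
qed

lemma det_rows_reduce:
  fixes M :: "real^'n^'n"
  assumes "finite T" "z \<notin> T"
  shows "det (\<chi> i. if i = z then u else if i \<in> T then row i M + c i *s u else row i M)
       = det (\<chi> i. if i = z then u else row i M)"
  using assms
proof (induction T rule: finite_induct)
  case empty
  show ?case by (rule arg_cong[where f=det]) (simp add: vec_eq_iff)
next
  case (insert t T)
  let ?A = "(\<chi> i. if i = z then u else if i \<in> insert t T then row i M + c i *s u else row i M) :: real^'n^'n"
  have tz: "t \<noteq> z" using insert by auto
  have "det ?A = det (\<chi> k. if k = t then row t ?A + (- c t) *s row z ?A else row k ?A)"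
    by (rule det_row_operation[symmetric]) (rule tz)
  also have "(\<chi> k. if k = t then row t ?A + (- c t) *s row z ?A else row k ?A)
      = (\<chi> i. if i = z then u else if i \<in> T then row i M + c i *s u else row i M)"
    using tz insert.hyps by (auto simp: vec_eq_iff row_def algebra_simps)
  also have "det \<dots> = det (\<chi> i. if i = z then u else row i M)"
    using insert by simp
  finally show ?case .
qed

lemma rank1_det_aux:
  fixes M :: "real^'n^'n" and u x :: "real^'n"
  assumes u: "u = sum (\<lambda>i. x$i *s row i M) UNIV" and T: "finite T"
  shows "det (\<chi> i. if i \<in> T then row i M + (a * u$i) *s u else row i M)
     = det M * (1 + a * (\<Sum>i\<in>T. u$i * x$i))"
  using T
proof (induction T rule: finite_induct)
  case empty
  have "(\<chi> i. row i M) = M" by (simp add: vec_eq_iff row_def)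
  then show ?case by simp
next
  case (insert z T)
  let ?c = "\<lambda>i. if i \<in> T then row i M + (a * u$i) *s u else row i M"
  have "det (\<chi> i. if i \<in> insert z T then row i M + (a * u$i) *s u else row i M)
      = det (\<chi> i. if i = z then row i M + (a * u$i) *s u else ?c i)"
    by (rule arg_cong[where f=det]) (auto simp: vec_eq_iff)
  also have "\<dots> = det (\<chi> i. if i = z then row i M else ?c i) + det (\<chi> i. if i = z then (a * u$i) *s u else ?c i)"
    by (rule det_row_add)
  also have "det (\<chi> i. if i = z then row i M else ?c i) = det (\<chi> i. ?c i)"
    by (rule arg_cong[where f=det]) (use insert in \<open>auto simp: vec_eq_iff\<close>)
  also have "det (\<chi> i. ?c i) = det M * (1 + a * (\<Sum>i\<in>T. u$i * x$i))"
    using insert by simp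
  also have "det (\<chi> i. if i = z then (a * u$i) *s u else ?c i)
      = det (\<chi> i. if i = z then (a * u$z) *s u else ?c i)"
    by (rule arg_cong[where f=det]) (auto simp: vec_eq_iff)
  also have "\<dots> = (a * u$z) * det (\<chi> i. if i = z then u else ?c i)"
    by (rule det_row_mul)
  also have "det (\<chi> i. if i = z then u else ?c i) = det (\<chi> i. if i = z then u else row i M)"
    using det_rows_reduce[OF insert(1,2), of u M "\<lambda>i. a * u$i"] by simp
  also have "det (\<chi> i. if i = z then u else row i M) = x$z * det M"
    using cramer_lemma_transpose[of z x M] u by metis
  finally show ?case
    using insert by (simp add: algebra_simps)
qed

lemma rank1_det:
  fixes M :: "real^'n^'n" and u x :: "real^'n"
  assumes ux: "transpose M *v x = u"
  shows "det (M + a *\<^sub>R (\<chi> i j. u$i * u$j)) = det M * (1 + a * (u \<bullet> x))"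
proof -
  have u: "u = sum (\<lambda>i. x$i *s row i M) UNIV"
    using ux by (simp add: vec_eq_iff matrix_vector_mult_def transpose_def row_def sum_component mult.commute)
  have "M + a *\<^sub>R (\<chi> i j. u$i * u$j) = (\<chi> i. if i \<in> UNIV then row i M + (a * u$i) *s u else row i M)"
    by (simp add: vec_eq_iff row_def)
  then show ?thesis
    using rank1_det_aux[OF u, of UNIV a] by (simp add: inner_vec_def)
qed

typedef (overloaded) ('a::euclidean_space) bidx = "Basis :: 'a set"
  morphisms bRep bAbs
  using nonempty_Basis by blast

lemma finite_UNIV_bidx: "finite (UNIV :: 'a::euclidean_space bidx set)"
proof -
  have "(UNIV :: 'a bidx set) = bAbs ` Basis"
    using type_definition.univ[OF type_definition_bidx] .
  then show ?thesis by (metis finite_Basis finite_imageI)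
qed

instance bidx :: (euclidean_space) finite
  by standard (rule finite_UNIV_bidx)

definition bord :: "'a::euclidean_space bidx \<Rightarrow> nat" where
  "bord = (SOME f. inj f)"

lemma inj_bord: "inj bord"
proof -
  have "\<exists>f::'a bidx \<Rightarrow> nat. inj f"
    using finite_imp_inj_to_nat_seg[OF finite_UNIV_bidx] by blast
  then show ?thesis unfolding bord_def by (rule someI_ex)
qed

instantiation bidx :: (euclidean_space) wellorder
begin
definition less_eq_bidx :: "'a bidx \<Rightarrow> 'a bidx \<Rightarrow> bool" where
  "less_eq_bidx x y = (bord x \<le> bord y)"
definition less_bidx :: "'a bidx \<Rightarrow> 'a bidx \<Rightarrow> bool" where
  "less_bidx x y = (bord x < bord y)"
instance
proof
  fix x y z :: "'a bidx"
  show "(x < y) = (x \<le> y \<and> \<not> y \<le> x)" by (auto simp: less_eq_bidx_def less_bidx_def)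
  show "x \<le> x" by (simp add: less_eq_bidx_def)
  show "x \<le> y \<Longrightarrow> y \<le> z \<Longrightarrow> x \<le> z" by (simp add: less_eq_bidx_def)
  show "x \<le> y \<Longrightarrow> y \<le> x \<Longrightarrow> x = y" using inj_bord by (auto simp: less_eq_bidx_def dest: injD)
  show "x \<le> y \<or> y \<le> x" by (auto simp: less_eq_bidx_def)
next
  fix P :: "'a bidx \<Rightarrow> bool" and a
  assume H: "\<And>x. (\<And>y. y < x \<Longrightarrow> P y) \<Longrightarrow> P x"
  have "\<And>n x. bord x = n \<Longrightarrow> P x"
  proof -
    fix n
    show "\<And>x. bord x = n \<Longrightarrow> P x"
      by (induction n rule: less_induct) (metis H less_bidx_def)
  qed
  then show "P a" by blast
qed
end

lemma bRep_in: "bRep i \<in> Basis" using bRep by blast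
lemma bRep_inj: "inj bRep" by (meson bRep_inject injI)
lemma bRep_range: "range bRep = (Basis :: 'a::euclidean_space set)"
  using type_definition.Rep_range[OF type_definition_bidx] .

definition Tv :: "'a::euclidean_space \<Rightarrow> real^('a bidx)" where
  "Tv x = (\<chi> i. x \<bullet> bRep i)"
definition Tinv :: "real^('a::euclidean_space bidx) \<Rightarrow> 'a" where
  "Tinv w = (\<Sum>i\<in>UNIV. (w$i) *\<^sub>R bRep i)"

lemma sum_bidx: "(\<Sum>i\<in>UNIV. f (bRep i)) = (\<Sum>b\<in>(Basis::'a::euclidean_space set). f b)"
proof -
  have "sum f (range bRep) = sum (f \<circ> bRep) UNIV" by (rule sum.reindex[OF bRep_inj])
  then show ?thesis by (simp only: bRep_range comp_def)
qed

lemma prod_bidx: "(\<Prod>i\<in>UNIV. f (bRep i)) = (\<Prod>b\<in>(Basis::'a::euclidean_space set). f b)"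
proof -
  have "prod f (range bRep) = prod (f \<circ> bRep) UNIV" by (rule prod.reindex[OF bRep_inj])
  then show ?thesis by (simp only: bRep_range comp_def)
qed

lemma Tinv_Tv[simp]: "Tinv (Tv x) = x"
  unfolding Tinv_def Tv_def using sum_bidx[of "\<lambda>b. (x \<bullet> b) *\<^sub>R b"]
  by (simp add: euclidean_representation)

lemma inner_bRep: "bRep i \<bullet> bRep j = (if i = j then 1 else 0)"
  using bRep_in[of i] bRep_in[of j] bRep_inject[of i j] by (auto simp: inner_not_same_Basis)

lemma Tinv_inner: "Tinv w \<bullet> bRep j = w $ j"
  by (simp add: Tinv_def inner_sum_left inner_bRep if_distrib cong: if_cong)

lemma Tv_Tinv[simp]: "Tv (Tinv w) = w"
  by (simp add: Tv_def vec_eq_iff Tinv_inner)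

lemma linear_Tv: "linear Tv"
  by (rule linearI) (simp_all add: Tv_def vec_eq_iff inner_add_left)

lemma linear_Tinv: "linear Tinv"
  by (rule linearI) (simp_all add: Tinv_def scaleR_add_left sum.distrib scaleR_sum_right)

lemma bounded_linear_Tv: "bounded_linear Tv"
  using linear_Tv by (simp add: linear_conv_bounded_linear)
lemma bounded_linear_Tinv: "bounded_linear Tinv"
  using linear_Tinv by (simp add: linear_conv_bounded_linear)

lemma Tv_measurable[measurable]: "Tv \<in> borel_measurable borel"
  using bounded_linear_Tv by (intro borel_measurable_continuous_onI linear_continuous_on)
lemma Tinv_measurable[measurable]: "Tinv \<in> borel_measurable borel"
  using bounded_linear_Tinv by (intro borel_measurable_continuous_onI linear_continuous_on)

lemma inner_axis_vec: "(w::real^'n) \<bullet> axis i 1 = w $ i"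
  by (simp add: inner_axis)

lemma Tv_preimage_box:
  "Tv -` box l u = box (Tinv l) (Tinv u)"
proof -
  have "Tv -` box l u = {x. \<forall>i. l$i < x \<bullet> bRep i \<and> x \<bullet> bRep i < u$i}"
    by (auto simp: box_def Basis_vec_def inner_axis_vec Tv_def)
  also have "\<dots> = {x. \<forall>b\<in>Basis. Tinv l \<bullet> b < x \<bullet> b \<and> x \<bullet> b < Tinv u \<bullet> b}"
  proof (intro Collect_cong iffI ballI allI)
    fix x b assume H: "\<forall>i. l$i < x \<bullet> bRep i \<and> x \<bullet> bRep i < u$i" and b: "(b::'a) \<in> Basis"
    then obtain i where "b = bRep i" using bRep_range by (metis rangeE)
    then show "Tinv l \<bullet> b < x \<bullet> b \<and> x \<bullet> b < Tinv u \<bullet> b" using H by (simp add: Tinv_inner)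
  next
    fix x i assume "\<forall>b\<in>Basis. Tinv l \<bullet> b < x \<bullet> b \<and> x \<bullet> b < Tinv u \<bullet> b"
    then show "l$i < x \<bullet> bRep i \<and> x \<bullet> bRep i < u$i" using bRep_in[of i] by (metis Tinv_inner)
  qed
  finally show ?thesis by (simp add: box_def)
qed

lemma lborel_cart_eq: "(lborel :: (real^('a::euclidean_space bidx)) measure) = distr (lborel::'a measure) borel Tv"
proof (rule lborel_eqI)
  fix l u :: "real^('a bidx)"
  assume le: "\<And>b. b \<in> Basis \<Longrightarrow> l \<bullet> b \<le> u \<bullet> b"
  then have le': "\<And>i. l $ i \<le> u $ i"
    by (metis axis_in_Basis_iff inner_axis_vec Basis_real_def insertI1)
  have "emeasure (distr lborel borel Tv) (box l u) = emeasure lborel (box (Tinv l) (Tinv u))"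
    by (simp add: emeasure_distr Tv_preimage_box)
  also have "\<dots> = (\<Prod>b\<in>(Basis::'a set). (Tinv u - Tinv l) \<bullet> b)"
  proof (rule emeasure_lborel_box)
    fix b :: 'a assume "b \<in> Basis"
    then obtain i where "b = bRep i" using bRep_range by blast
    then show "Tinv l \<bullet> b \<le> Tinv u \<bullet> b" by (simp add: Tinv_inner le')
  qed
  also have "(\<Prod>b\<in>(Basis::'a set). (Tinv u - Tinv l) \<bullet> b) = (\<Prod>i\<in>UNIV. (u - l) $ i)"
    using prod_bidx[of "\<lambda>b. (Tinv u - Tinv l) \<bullet> b"] by (simp add: inner_diff_left Tinv_inner)
  also have "\<dots> = (\<Prod>b\<in>Basis. (u - l) \<bullet> b)"
  proof -
    have B: "(Basis :: (real^('a bidx)) set) = range (\<lambda>i. axis i 1)" by (auto simp: Basis_vec_def)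
    have "inj (\<lambda>i::'a bidx. axis i (1::real))" by (auto simp: inj_on_def axis_eq_axis)
    then have "prod ((\<bullet>) (u - l)) (range (\<lambda>i. axis i 1)) = prod (((\<bullet>) (u - l)) \<circ> (\<lambda>i. axis i 1)) UNIV"
      by (rule prod.reindex)
    moreover have "\<And>i. (u - l) \<bullet> axis i 1 = u$i - l$i" by (metis inner_axis_vec vector_minus_component)
    ultimately show ?thesis unfolding B by (simp only: comp_def) simp
  qed
  finally show "emeasure (distr lborel borel Tv) (box l u) = (\<Prod>b\<in>Basis. (u - l) \<bullet> b)" .
qed simp

definition detd :: "('a::euclidean_space \<Rightarrow> 'a) \<Rightarrow> real" where
  "detd L = det ((\<chi> i j. L (bRep j) \<bullet> bRep i) :: real^('a bidx)^('a bidx))"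

lemma Tinv_axis: "Tinv (axis j 1 :: real^('a::euclidean_space bidx)) = bRep j"
  by (simp add: Tinv_def axis_def if_distrib[of "\<lambda>a. a *\<^sub>R _"] sum.delta cong: if_cong)

lemma matrix_conj: "matrix (\<lambda>v. Tv (L (Tinv v))) = (\<chi> i j. L (bRep j) \<bullet> bRep i)"
  by (simp add: matrix_def Tinv_axis Tv_def)

lemma Tv_image: "Tv ` A = Tinv -` A"
  by (auto simp: image_iff) (metis Tinv_Tv Tv_Tinv)

lemma nn_integral_transfer:
  assumes "F \<in> borel_measurable borel"
  shows "(\<integral>\<^sup>+w. F w \<partial>(lborel :: (real^('a::euclidean_space bidx)) measure)) = (\<integral>\<^sup>+x. F (Tv x) \<partial>(lborel :: 'a measure))"
  by (subst lborel_cart_eq) (rule nn_integral_distr, simp_all add: assms)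

lemma cov_d:
  fixes g :: "'a::euclidean_space \<Rightarrow> 'a" and g' :: "'a \<Rightarrow> 'a \<Rightarrow> 'a" and h :: "'a \<Rightarrow> real"
  assumes A: "A \<in> sets borel" and gA: "g ` A \<in> sets borel"
   and der: "\<And>x. (g has_derivative g' x) (at x)"
   and inj: "inj g"
   and hm: "h \<in> borel_measurable borel" and h0: "\<And>x. 0 \<le> h x"
   and hint: "(\<integral>\<^sup>+x. ennreal (h x) \<partial>lborel) < \<infinity>"
   and Jm: "(\<lambda>x. detd (g' x)) \<in> borel_measurable borel"
   and gm: "g \<in> borel_measurable borel"
  shows "(\<integral>\<^sup>+x. ennreal (indicator (g`A) x * h x) \<partial>lborel)
       = (\<integral>\<^sup>+x. ennreal (indicator A x * (\<bar>detd (g' x)\<bar> * h (g x))) \<partial>lborel)"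
proof -
  define G where "G = (\<lambda>w. Tv (g (Tinv w)))"
  define G' where "G' = (\<lambda>w v. Tv (g' (Tinv w) (Tinv v)))"
  define S where "S = (Tinv -` A :: (real^('a bidx)) set)"
  define H where "H = (\<lambda>w. h (Tinv w))"
  have Sb: "S \<in> sets borel" unfolding S_def using measurable_sets[OF Tinv_measurable A] by simp
  have GS: "G ` S = Tinv -` (g ` A)"
  proof (intro equalityI subsetI)
    fix x assume "x \<in> G ` S" then show "x \<in> Tinv -` (g ` A)" unfolding G_def S_def by auto
  next
    fix x assume "x \<in> Tinv -` (g ` A)"
    then obtain a where a: "a \<in> A" "Tinv x = g a" by auto
    then have "x = G (Tv a)" unfolding G_def by (metis Tv_Tinv Tinv_Tv)
    moreover have "Tv a \<in> S" using a unfolding S_def by simp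
    ultimately show "x \<in> G ` S" by blast
  qed
  have GSb: "G ` S \<in> sets borel" unfolding GS using measurable_sets[OF Tinv_measurable gA] by simp
  have Sl: "S \<in> sets lebesgue" using Sb by simp
  have derG: "(G has_derivative G' w) (at w within S)" for w
  proof -
    have "((\<lambda>w. g (Tinv w)) has_derivative (\<lambda>v. g' (Tinv w) (Tinv v))) (at w)"
      by (rule has_derivative_compose[OF bounded_linear_imp_has_derivative[OF bounded_linear_Tinv] der])
    from has_derivative_compose[OF this bounded_linear_imp_has_derivative[OF bounded_linear_Tv]]
    show ?thesis unfolding G_def G'_def by (rule has_derivative_at_withinI)
  qed
  have injG: "inj_on G S"
  proof (rule inj_onI)
    fix a b assume "G a = G b"
    then have "Tinv (G a) = Tinv (G b)" by simp
    then have "g (Tinv a) = g (Tinv b)" unfolding G_def by simp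
    then have "Tinv a = Tinv b" using inj by (simp add: inj_eq)
    then have "Tv (Tinv a) = Tv (Tinv b)" by simp
    then show "a = b" by simp
  qed
  have HGm: "(\<lambda>w. indicator (G ` S) w * H w) \<in> borel_measurable borel"
    unfolding H_def using GSb hm by measurable
  have "(\<integral>\<^sup>+w. ennreal (indicator (G ` S) w * H w) \<partial>lborel) = (\<integral>\<^sup>+x. ennreal (indicator (g ` A) x * h x) \<partial>lborel)"
    by (subst nn_integral_transfer) (use HGm in \<open>simp_all add: GS H_def indicator_def\<close>)
  also have "\<dots> \<le> (\<integral>\<^sup>+x. ennreal (h x) \<partial>lborel)"
    by (intro nn_integral_mono) (auto simp: indicator_def h0)
  finally have fin: "(\<integral>\<^sup>+w. ennreal (indicator (G ` S) w * H w) \<partial>lborel) < \<infinity>"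
    using hint by (meson le_less_trans)
  have "integrable lborel (\<lambda>w. indicator (G ` S) w * H w)"
    by (rule integrableI_nonneg) (use HGm fin in \<open>auto simp: H_def h0\<close>)
  then have "integrable lebesgue (\<lambda>w. indicator (G ` S) w * H w)"
  proof -
    have "(\<lambda>w. indicator (G ` S) w * H w) \<in> borel_measurable lborel" using HGm by simp
    from integrable_completion[OF this] show ?thesis using \<open>integrable lborel _\<close> by simp
  qed
  then have Hai: "H absolutely_integrable_on (G ` S)"
    by (simp add: set_integrable_def)
  define f where "f = (\<lambda>w. vec (H w) :: real^1)"
  have fai: "f absolutely_integrable_on (G ` S)"
    using Hai by (simp add: absolutely_integrable_on_1_iff f_def)
  from has_absolute_integral_change_of_variables[OF Sl derG injG, of f "integral (G ` S) f"] fai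
  have cv: "(\<lambda>x. \<bar>det (matrix (G' x))\<bar> *\<^sub>R f (G x)) absolutely_integrable_on S \<and>
      integral S (\<lambda>x. \<bar>det (matrix (G' x))\<bar> *\<^sub>R f (G x)) = integral (G ` S) f" by blast
  define J where "J = (\<lambda>w. \<bar>det (matrix (G' w))\<bar> * H (G w))"
  have Jai: "J absolutely_integrable_on S"
    using cv by (simp add: absolutely_integrable_on_1_iff f_def J_def)
  have Jeq: "integral S J = integral (G ` S) H"
    using cv[THEN conjunct2] unfolding integral_on_1_eq[of S] integral_on_1_eq[of "G ` S"]
    by (simp add: f_def J_def)
  have J0: "\<And>w. 0 \<le> J w" by (simp add: J_def H_def h0)
  have "(J has_integral integral S J) S"
    using Jai set_lebesgue_integral_eq_integral(1) by (metis integrable_integral)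
  then have I1: "(\<integral>\<^sup>+w. ennreal (indicator S w * J w) \<partial>lborel) = ennreal (integral S J)"
    using nn_integral_has_integral_lebesgue[of S J] J0 by simp
  have "(H has_integral integral (G ` S) H) (G ` S)"
    using Hai set_lebesgue_integral_eq_integral(1) by (metis integrable_integral)
  then have I2: "(\<integral>\<^sup>+w. ennreal (indicator (G ` S) w * H w) \<partial>lborel) = ennreal (integral (G ` S) H)"
    using nn_integral_has_integral_lebesgue[of "G ` S" H] by (simp add: H_def h0)
  have Jrw: "J w = \<bar>detd (g' (Tinv w))\<bar> * h (g (Tinv w))" for w
    by (simp add: J_def G'_def matrix_conj detd_def H_def G_def)
  have Jm2: "(\<lambda>w. indicator S w * J w) \<in> borel_measurable borel"
    unfolding Jrw S_def using A Jm gm hm by measurable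
  have "(\<integral>\<^sup>+x. ennreal (indicator (g`A) x * h x) \<partial>lborel) = (\<integral>\<^sup>+w. ennreal (indicator (G ` S) w * H w) \<partial>lborel)"
    by (subst nn_integral_transfer) (use HGm in \<open>simp_all add: GS H_def indicator_def\<close>)
  also have "\<dots> = (\<integral>\<^sup>+w. ennreal (indicator S w * J w) \<partial>lborel)"
    using I1 I2 Jeq by simp
  also have "\<dots> = (\<integral>\<^sup>+x. ennreal (indicator A x * (\<bar>detd (g' x)\<bar> * h (g x))) \<partial>lborel)"
    by (subst nn_integral_transfer) (use Jm2 in \<open>simp_all add: Jrw S_def indicator_def\<close>)
  finally show ?thesis .
qed

lemma det_scaleR_cart: "det (c *\<^sub>R (A::real^'n^'n)) = c ^ CARD('n) * det A"
proof -
  have "c *\<^sub>R A = (\<chi> i. c *s row i A)" by (simp add: vec_eq_iff row_def)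
  then show ?thesis using det_rows_mul[of "\<lambda>_. c" "\<lambda>i. row i A"]
    by (simp add: prod_constant row_def)
qed

lemma mat_ratio:
  fixes Mm :: "real^'n^'n" and u u' :: "real^'n"
  assumes pd: "\<And>x. lam * (norm x)\<^sup>2 \<le> x \<bullet> (Mm *v x)" and lam: "lam > 0"
    and a: "0 \<le> a" "a \<le> amax" and a': "0 \<le> a'" and u: "norm u \<le> 1"
  shows "det Mm \<noteq> 0"
    and "\<bar>det (Mm + a *\<^sub>R (\<chi> i j. u$i * u$j))\<bar> \<le> (1 + amax / lam) * \<bar>det Mm\<bar>"
    and "\<bar>det Mm\<bar> \<le> \<bar>det (Mm + a' *\<^sub>R (\<chi> i j. u'$i * u'$j))\<bar>"
proof -
  have injM: "inj ((*v) Mm)"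
  proof (rule inj_onI)
    fix y z assume "Mm *v y = Mm *v z"
    then have "Mm *v (y - z) = 0" by (simp add: matrix_vector_mult_diff_distrib)
    define x where "x = y - z"
    have "Mm *v x = 0" using \<open>Mm *v (y - z) = 0\<close> by (simp add: x_def)
    then have "lam * (norm x)\<^sup>2 \<le> 0" using pd[of x] by simp
    then have "x = 0" using lam by (simp add: mult_le_0_iff)
    then show "y = z" by (simp add: x_def)
  qed
  show dM: "det Mm \<noteq> 0"
    using det_nz_iff_inj[OF matrix_vector_mul_linear[of Mm]] injM by simp
  have key: "\<And>v. \<exists>x. 0 \<le> v \<bullet> x \<and> v \<bullet> x \<le> (norm v)\<^sup>2 / lam \<and>
              det (Mm + b *\<^sub>R (\<chi> i j. v$i * v$j)) = det Mm * (1 + b * (v \<bullet> x))" for b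
  proof -
    fix v :: "real^'n"
    have "det (transpose Mm) \<noteq> 0" using dM by simp
    then obtain B where B: "transpose Mm ** B = mat 1"
      using invertible_det_nz[of "transpose Mm"] unfolding invertible_def by blast
    define x where "x = B *v v"
    have tx: "transpose Mm *v x = v" unfolding x_def
      by (metis matrix_vector_mul_assoc B matrix_vector_mul_lid)
    have vx: "v \<bullet> x = x \<bullet> (Mm *v x)"
      using tx dot_lmul_matrix[of x Mm x] by (simp add: inner_commute)
    have lb: "lam * (norm x)\<^sup>2 \<le> v \<bullet> x" using pd[of x] vx by simp
    have "v \<bullet> x \<le> norm v * norm x" by (rule norm_cauchy_schwarz)
    with lb have "lam * (norm x)\<^sup>2 \<le> norm v * norm x" by linarith
    then have nx: "lam * norm x \<le> norm v"
      by (cases "norm x = 0") (auto simp: power2_eq_square mult.assoc[symmetric] intro: mult_right_le_imp_le)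
    have "v \<bullet> x \<le> norm v * norm x" by (rule norm_cauchy_schwarz)
    also have "\<dots> \<le> norm v * (norm v / lam)"
      using nx lam by (intro mult_left_mono) (auto simp: field_simps)
    finally have ub: "v \<bullet> x \<le> (norm v)\<^sup>2 / lam" by (simp add: power2_eq_square)
    have "0 \<le> v \<bullet> x" using lb lam by (meson order_trans mult_nonneg_nonneg less_imp_le zero_le_power2)
    with ub rank1_det[OF tx] show "\<exists>x. 0 \<le> v \<bullet> x \<and> v \<bullet> x \<le> (norm v)\<^sup>2 / lam \<and>
              det (Mm + b *\<^sub>R (\<chi> i j. v$i * v$j)) = det Mm * (1 + b * (v \<bullet> x))" by blast
  qed
  obtain x where x: "0 \<le> u \<bullet> x" "u \<bullet> x \<le> (norm u)\<^sup>2 / lam"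
      "det (Mm + a *\<^sub>R (\<chi> i j. u$i * u$j)) = det Mm * (1 + a * (u \<bullet> x))"
    using key by blast
  have "(norm u)\<^sup>2 \<le> 1" using u norm_ge_zero by (metis power_le_one one_power2)
  then have "u \<bullet> x \<le> 1 / lam" using x(2) lam by (meson divide_right_mono less_imp_le order_trans)
  then have "a * (u \<bullet> x) \<le> amax * (1 / lam)"
    using a x(1) lam by (intro mult_mono) auto
  then have "0 \<le> 1 + a * (u \<bullet> x)" "1 + a * (u \<bullet> x) \<le> 1 + amax / lam"
    using a x(1) by auto
  then show "\<bar>det (Mm + a *\<^sub>R (\<chi> i j. u$i * u$j))\<bar> \<le> (1 + amax / lam) * \<bar>det Mm\<bar>"
    unfolding x(3) by (simp add: abs_mult mult.commute mult_left_mono)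
  obtain x' where x': "0 \<le> u' \<bullet> x'"
      "det (Mm + a' *\<^sub>R (\<chi> i j. u'$i * u'$j)) = det Mm * (1 + a' * (u' \<bullet> x'))"
    using key by blast
  have "1 \<le> 1 + a' * (u' \<bullet> x')" using a' x'(1) by simp
  then show "\<bar>det Mm\<bar> \<le> \<bar>det (Mm + a' *\<^sub>R (\<chi> i j. u'$i * u'$j))\<bar>"
  proof -
    have "\<bar>det Mm\<bar> * 1 \<le> \<bar>det Mm\<bar> * (1 + a' * (u' \<bullet> x'))"
      using \<open>1 \<le> _\<close> by (intro mult_left_mono) auto
    then show ?thesis unfolding x'(2) using \<open>1 \<le> _\<close> by (simp add: abs_mult)
  qed
qed


lemma Tv_inner: "Tv a \<bullet> Tv b = a \<bullet> (b::'a::euclidean_space)"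
proof -
  have "Tv a \<bullet> Tv b = (\<Sum>i\<in>UNIV. (a \<bullet> bRep i) * (b \<bullet> bRep i))"
    by (simp add: inner_vec_def Tv_def)
  also have "\<dots> = (\<Sum>bb\<in>(Basis::'a set). (a \<bullet> bb) * (b \<bullet> bb))"
    by (rule sum_bidx)
  also have "\<dots> = a \<bullet> b" by (simp add: euclidean_inner[symmetric])
  finally show ?thesis .
qed

lemma Tv_norm: "norm (Tv a) = norm (a::'a::euclidean_space)"
  using Tv_inner[of a a] by (simp add: norm_eq_sqrt_inner)

lemma Tinv_norm: "norm (Tinv w) = norm (w :: real^('a::euclidean_space bidx))"
  using Tv_norm[of "Tinv w"] by simp

lemma Mm_mult:
  assumes "linear M"
  shows "((\<chi> i j. M (bRep j) \<bullet> bRep i) :: real^('a::euclidean_space bidx)^('a bidx)) *v x = Tv (M (Tinv x))"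
proof -
  have "M (Tinv x) = (\<Sum>j\<in>UNIV. x$j *\<^sub>R M (bRep j))"
    unfolding Tinv_def using assms by (simp add: linear_sum linear_scale)
  then show ?thesis
    by (simp add: vec_eq_iff matrix_vector_mult_def Tv_def inner_sum_left mult.commute)
qed

lemma detd_ratio:
  fixes M :: "'a::euclidean_space \<Rightarrow> 'a" and u u' :: 'a
  assumes lin: "linear M" and pd: "\<And>v. lam * (norm v)\<^sup>2 \<le> v \<bullet> M v" and lam: "lam > 0"
    and a: "0 \<le> a" "a \<le> amax" and a': "0 \<le> a'" and u: "norm u \<le> 1" and c: "c \<noteq> 0"
  shows "detd (\<lambda>v. c *\<^sub>R (M v + (a' * (u' \<bullet> v)) *\<^sub>R u')) \<noteq> 0"
    and "\<bar>detd (\<lambda>v. c *\<^sub>R (M v + (a * (u \<bullet> v)) *\<^sub>R u))\<bar>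
         \<le> (1 + amax / lam) * \<bar>detd (\<lambda>v. c *\<^sub>R (M v + (a' * (u' \<bullet> v)) *\<^sub>R u'))\<bar>"
proof -
  define Mm where "Mm = ((\<chi> i j. M (bRep j) \<bullet> bRep i) :: real^('a bidx)^('a bidx))"
  have pdm: "lam * (norm x)\<^sup>2 \<le> x \<bullet> (Mm *v x)" for x
    using pd[of "Tinv x"] unfolding Mm_def Mm_mult[OF lin]
    by (metis Tinv_norm Tv_Tinv Tv_inner)
  have ent: "detd (\<lambda>v. c *\<^sub>R (M v + (b * (w \<bullet> v)) *\<^sub>R w))
      = c ^ CARD('a bidx) * det (Mm + b *\<^sub>R (\<chi> i j. Tv w $ i * Tv w $ j))" for b w
  proof -
    have "((\<chi> i j. (c *\<^sub>R (M (bRep j) + (b * (w \<bullet> bRep j)) *\<^sub>R w)) \<bullet> bRep i) :: real^('a bidx)^('a bidx))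
        = c *\<^sub>R (Mm + b *\<^sub>R (\<chi> i j. Tv w $ i * Tv w $ j))"
      by (simp add: Mm_def vec_eq_iff Tv_def inner_add_left algebra_simps)
    then show ?thesis unfolding detd_def by (simp add: det_scaleR_cart)
  qed
  have nu: "norm (Tv u) \<le> 1" using u Tv_norm by metis
  have R1: "det Mm \<noteq> 0" by (rule mat_ratio(1)[OF pdm lam a a' nu])
  have R2: "\<bar>det (Mm + a *\<^sub>R (\<chi> i j. Tv u $ i * Tv u $ j))\<bar> \<le> (1 + amax / lam) * \<bar>det Mm\<bar>"
    by (rule mat_ratio(2)[OF pdm lam a a' nu])
  have R3: "\<bar>det Mm\<bar> \<le> \<bar>det (Mm + a' *\<^sub>R (\<chi> i j. Tv u' $ i * Tv u' $ j))\<bar>"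
    by (rule mat_ratio(3)[OF pdm lam a a' nu])
  have cn: "c ^ CARD('a bidx) \<noteq> 0" using c by simp
  show "detd (\<lambda>v. c *\<^sub>R (M v + (a' * (u' \<bullet> v)) *\<^sub>R u')) \<noteq> 0"
    unfolding ent using R1 R3 cn by auto
  have "\<bar>c ^ CARD('a bidx)\<bar> * \<bar>det (Mm + a *\<^sub>R (\<chi> i j. Tv u $ i * Tv u $ j))\<bar>
      \<le> \<bar>c ^ CARD('a bidx)\<bar> * ((1 + amax / lam) * \<bar>det (Mm + a' *\<^sub>R (\<chi> i j. Tv u' $ i * Tv u' $ j))\<bar>)"
  proof (intro mult_left_mono)
    have "0 \<le> 1 + amax / lam" using a lam by simp
    then show "\<bar>det (Mm + a *\<^sub>R (\<chi> i j. Tv u $ i * Tv u $ j))\<bar>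
      \<le> (1 + amax / lam) * \<bar>det (Mm + a' *\<^sub>R (\<chi> i j. Tv u' $ i * Tv u' $ j))\<bar>"
      using R2 R3 by (meson mult_left_mono order_trans)
  qed simp
  then show "\<bar>detd (\<lambda>v. c *\<^sub>R (M v + (a * (u \<bullet> v)) *\<^sub>R u))\<bar>
         \<le> (1 + amax / lam) * \<bar>detd (\<lambda>v. c *\<^sub>R (M v + (a' * (u' \<bullet> v)) *\<^sub>R u'))\<bar>"
    unfolding ent by (simp add: abs_mult mult_ac)
qed

lemma deriv_ge_lim:
  assumes d: "(\<phi> has_real_derivative d) (at 0)"
    and k: "\<And>t. 0 < t \<Longrightarrow> t < 1 \<Longrightarrow> k \<le> (\<phi> t - \<phi> 0) / t"
  shows "k \<le> d"
proof -
  have "((\<lambda>y. (\<phi> y - \<phi> 0) / (y - 0)) \<longlongrightarrow> d) (at 0)"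
    using d has_field_derivative_iff by blast
  then have T: "((\<lambda>y. (\<phi> y - \<phi> 0) / y) \<longlongrightarrow> d) (at_right 0)"
    by (simp add: filterlim_at_split)
  have ev: "eventually (\<lambda>t. k \<le> (\<phi> t - \<phi> 0) / t) (at_right (0::real))"
    using eventually_at_right_real[of 0 1] k by (auto elim!: eventually_mono)
  show ?thesis
    by (rule tendsto_le[OF _ T tendsto_const ev]) simp
qed

lemma deriv_le_lim:
  assumes d: "(\<phi> has_real_derivative d) (at 0)"
    and k: "\<And>t. 0 < t \<Longrightarrow> t < 1 \<Longrightarrow> (\<phi> t - \<phi> 0) / t \<le> h t"
    and h: "(h \<longlongrightarrow> H) (at_right 0)"
  shows "d \<le> H"
proof -
  have "((\<lambda>y. (\<phi> y - \<phi> 0) / (y - 0)) \<longlongrightarrow> d) (at 0)"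
    using d has_field_derivative_iff by blast
  then have T: "((\<lambda>y. (\<phi> y - \<phi> 0) / y) \<longlongrightarrow> d) (at_right 0)"
    by (simp add: filterlim_at_split)
  have ev: "eventually (\<lambda>t. (\<phi> t - \<phi> 0) / t \<le> h t) (at_right (0::real))"
    using eventually_at_right_real[of 0 1] k by (auto elim!: eventually_mono)
  show ?thesis
    by (rule tendsto_le[OF _ h T ev]) simp
qed

lemma L_tangent:
  assumes conv: "strictly_convex L" and L1: "\<And>t. (L has_real_derivative L1 t) (at t)"
  shows "L t + L1 t * (s - t) \<le> L s"
proof (cases "s = t")
  case True then show ?thesis by simp
next
  case False
  define \<phi> where "\<phi> = (\<lambda>\<tau>. L ((1 - \<tau>) * t + \<tau> * s))"
  have "((\<lambda>\<tau>. (1 - \<tau>) * t + \<tau> * s) has_real_derivative (s - t)) (at 0)"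
    by (auto intro!: derivative_eq_intros simp: algebra_simps)
  from DERIV_chain2[OF _ this, of L "L1 t"] L1
  have d: "(\<phi> has_real_derivative L1 t * (s - t)) (at 0)" unfolding \<phi>_def by simp
  have "L1 t * (s - t) \<le> L s - L t"
  proof (rule deriv_le_lim[OF d, where h="\<lambda>_. L s - L t"])
    fix \<tau> :: real assume "0 < \<tau>" "\<tau> < 1"
    then have "\<phi> \<tau> < (1 - \<tau>) * L t + \<tau> * L s"
    proof -
      have "\<forall>x y t. x \<noteq> y \<longrightarrow> 0 < t \<longrightarrow> t < 1 \<longrightarrow>
        L ((1 - t) * x + t * y) < (1 - t) * L x + t * L y" using conv unfolding strictly_convex_def .
      from this[rule_format, of t s \<tau>] show ?thesis using False \<open>0 < \<tau>\<close> \<open>\<tau> < 1\<close> unfolding \<phi>_def by simp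
    qed
    then have "\<phi> \<tau> - \<phi> 0 \<le> \<tau> * (L s - L t)" by (simp add: \<phi>_def algebra_simps)
    then show "(\<phi> \<tau> - \<phi> 0) / \<tau> \<le> L s - L t" using \<open>0 < \<tau>\<close> by (simp add: divide_le_eq mult.commute)
  qed simp
  then show ?thesis by simp
qed

lemma L2_nonneg:
  assumes conv: "strictly_convex L" and L1: "\<And>t. (L has_real_derivative L1 t) (at t)"
    and L2: "\<And>t. (L1 has_real_derivative L2 t) (at t)"
  shows "0 \<le> L2 t"
proof -
  have mono: "0 \<le> (L1 s - L1 t) * (s - t)" for s t
    using L_tangent[OF conv L1, of s t] L_tangent[OF conv L1, of t s] by (simp add: algebra_simps)
  have d: "((\<lambda>\<tau>. L1 (t + \<tau>)) has_real_derivative L2 t) (at 0)"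
  proof -
    have "((\<lambda>\<tau>. t + \<tau>) has_real_derivative 1) (at 0)" by (auto intro!: derivative_eq_intros)
    from DERIV_chain2[OF L2[of "t + 0"] this] show ?thesis by simp
  qed
  show ?thesis
  proof (rule deriv_ge_lim[OF d])
    fix \<tau> :: real assume "0 < \<tau>" "\<tau> < 1"
    then show "0 \<le> (L1 (t + \<tau>) - L1 (t + 0)) / \<tau>"
      using mono[of "t + \<tau>" t] by (simp add: zero_le_mult_iff)
  qed
qed

lemma R_tangent:
  fixes R :: "'a::euclidean_space \<Rightarrow> real"
  assumes sc: "strongly_convex 1 R" and D1: "\<And>x. (R has_derivative blinfun_apply (D1 x)) (at x)"
  shows "R f + D1 f (z - f) + (1/2) * (norm (z - f))\<^sup>2 \<le> R z"
proof -
  define \<phi> where "\<phi> = (\<lambda>\<tau>::real. R ((1 - \<tau>) *\<^sub>R f + \<tau> *\<^sub>R z))"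
  have "((\<lambda>\<tau>::real. (1 - \<tau>) *\<^sub>R f + \<tau> *\<^sub>R z) has_derivative (\<lambda>h. h *\<^sub>R (z - f))) (at 0)"
    by (auto intro!: derivative_eq_intros simp: algebra_simps)
  from has_derivative_compose[OF this D1]
  have "(\<phi> has_derivative (\<lambda>h. D1 f (h *\<^sub>R (z - f)))) (at 0)" unfolding \<phi>_def by simp
  then have d: "(\<phi> has_real_derivative D1 f (z - f)) (at 0)"
    unfolding has_field_derivative_def
    by (rule has_derivative_eq_rhs) (simp add: fun_eq_iff blinfun.scaleR_right mult.commute)
  have "D1 f (z - f) \<le> R z - R f - (1/2) * (norm (z - f))\<^sup>2"
  proof (rule deriv_le_lim[OF d, where h="\<lambda>\<tau>. R z - R f - (1/2) * (1 - \<tau>) * (norm (z - f))\<^sup>2"])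
    fix \<tau> :: real assume t: "0 < \<tau>" "\<tau> < 1"
    have "\<phi> \<tau> \<le> (1 - \<tau>) * R f + \<tau> * R z - (1/2) * \<tau> * (1 - \<tau>) * (norm (f - z))\<^sup>2"
    proof -
      have "\<forall>x y t. 0 \<le> t \<longrightarrow> t \<le> 1 \<longrightarrow>
        R ((1 - t) *\<^sub>R x + t *\<^sub>R y)
          \<le> (1 - t) * R x + t * R y - (1 / 2) * t * (1 - t) * (norm (x - y))\<^sup>2"
        using sc unfolding strongly_convex_def by simp
      from this[rule_format, of \<tau> f z] show ?thesis using t unfolding \<phi>_def by simp
    qed
    then have "\<phi> \<tau> - \<phi> 0 \<le> \<tau> * (R z - R f - (1/2) * (1 - \<tau>) * (norm (z - f))\<^sup>2)"
      by (simp add: \<phi>_def algebra_simps norm_minus_commute)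
    then show "(\<phi> \<tau> - \<phi> 0) / \<tau> \<le> R z - R f - (1/2) * (1 - \<tau>) * (norm (z - f))\<^sup>2"
      using t by (simp add: divide_le_eq mult.commute)
  next
    show "((\<lambda>\<tau>. R z - R f - (1/2) * (1 - \<tau>) * (norm (z - f))\<^sup>2) \<longlongrightarrow> R z - R f - (1/2) * (norm (z - f))\<^sup>2) (at_right 0)"
      by (auto intro!: tendsto_eq_intros)
  qed
  then show ?thesis by simp
qed

lemma R_hess:
  fixes R :: "'a::euclidean_space \<Rightarrow> real"
  assumes sc: "strongly_convex 1 R" and D1: "\<And>x. (R has_derivative blinfun_apply (D1 x)) (at x)"
    and D2: "\<And>x. (D1 has_derivative blinfun_apply (D2 x)) (at x)"
  shows "(norm v)\<^sup>2 \<le> D2 f v v"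
proof -
  define \<psi> where "\<psi> = (\<lambda>\<tau>::real. D1 (f + \<tau> *\<^sub>R v) v)"
  have "((\<lambda>\<tau>::real. f + \<tau> *\<^sub>R v) has_derivative (\<lambda>h. h *\<^sub>R v)) (at 0)"
    by (auto intro!: derivative_eq_intros)
  from has_derivative_compose[OF this D2]
  have "((\<lambda>\<tau>. D1 (f + \<tau> *\<^sub>R v)) has_derivative (\<lambda>h. D2 f (h *\<^sub>R v))) (at 0)" by simp
  then have "(\<psi> has_derivative (\<lambda>h. D2 f (h *\<^sub>R v) v)) (at 0)"
    unfolding \<psi>_def by (auto intro!: derivative_eq_intros)
  then have d: "(\<psi> has_real_derivative D2 f v v) (at 0)"
    unfolding has_field_derivative_def
    by (rule has_derivative_eq_rhs) (simp add: fun_eq_iff blinfun.scaleR_right blinfun.scaleR_left mult.commute)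
  show ?thesis
  proof (rule deriv_ge_lim[OF d])
    fix \<tau> :: real assume t: "0 < \<tau>" "\<tau> < 1"
    have a: "R f + D1 f (\<tau> *\<^sub>R v) + (1/2) * (norm (\<tau> *\<^sub>R v))\<^sup>2 \<le> R (f + \<tau> *\<^sub>R v)"
      using R_tangent[OF sc D1, of f "f + \<tau> *\<^sub>R v"] by simp
    have b: "R (f + \<tau> *\<^sub>R v) + D1 (f + \<tau> *\<^sub>R v) (- (\<tau> *\<^sub>R v)) + (1/2) * (norm (\<tau> *\<^sub>R v))\<^sup>2 \<le> R f"
      using R_tangent[OF sc D1, of "f + \<tau> *\<^sub>R v" f] by simp
    have e1: "D1 f (\<tau> *\<^sub>R v) = \<tau> * \<psi> 0" by (simp add: \<psi>_def blinfun.scaleR_right)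
    have e2: "D1 (f + \<tau> *\<^sub>R v) (- (\<tau> *\<^sub>R v)) = - (\<tau> * \<psi> \<tau>)"
      by (simp add: \<psi>_def blinfun.scaleR_right blinfun.minus_right)
    have e3: "(norm (\<tau> *\<^sub>R v))\<^sup>2 = \<tau> * \<tau> * (norm v)\<^sup>2" using t by (simp add: power2_eq_square)
    have "\<tau> * \<tau> * (norm v)\<^sup>2 \<le> \<tau> * (\<psi> \<tau> - \<psi> 0)"
      using a b unfolding e1 e2 e3 by (simp add: algebra_simps)
    then have "\<tau> * (norm v)\<^sup>2 \<le> \<psi> \<tau> - \<psi> 0" using t by (simp add: mult.assoc)
    then show "(norm v)\<^sup>2 \<le> (\<psi> \<tau> - \<psi> 0) / \<tau>" using t by (simp add: le_divide_eq mult.commute)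
  qed
qed

locale mech =
  fixes L L1 L2 :: "real \<Rightarrow> real"
    and R :: "'d::euclidean_space \<Rightarrow> real" and D1 :: "'d \<Rightarrow> ('d \<Rightarrow>\<^sub>L real)"
    and D2 :: "'d \<Rightarrow> ('d \<Rightarrow>\<^sub>L ('d \<Rightarrow>\<^sub>L real))"
    and c1 CR \<rho> \<eta> \<Phi> :: real and B :: nat and Np :: "'n set"
    and lam fp :: 'd and fn :: "'n \<Rightarrow> 'd" and x :: "nat \<Rightarrow> 'd" and y :: "nat \<Rightarrow> real"
  assumes L1: "\<And>t. (L has_real_derivative L1 t) (at t)"
   and L2: "\<And>t. (L1 has_real_derivative L2 t) (at t)"
   and L2c: "continuous_on UNIV L2"
   and Ltan: "\<And>s t. L t + L1 t * (s - t) \<le> L s"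
   and L1b: "\<And>t. \<bar>L1 t\<bar> \<le> 1" and L2b: "\<And>t. 0 \<le> L2 t \<and> L2 t \<le> c1"
   and D1: "\<And>z. (R has_derivative blinfun_apply (D1 z)) (at z)"
   and D2: "\<And>z. (D1 has_derivative blinfun_apply (D2 z)) (at z)"
   and D2c: "continuous_on UNIV D2"
   and Rtan: "\<And>f z. R f + D1 f (z - f) + (1/2) * (norm (z - f))\<^sup>2 \<le> R z"
   and Rhess: "\<And>f v. (norm v)\<^sup>2 \<le> D2 f v v"
   and Bpos: "B \<ge> 1" and CR: "CR > 0" and rho: "\<rho> > 0" and eta: "\<eta> > 0"
   and Npf: "finite Np"
   and kap: "\<rho> + \<Phi> + 2 * \<eta> * real (card Np) > 0"
   and data: "\<And>j. j < B \<Longrightarrow> norm (x j) \<le> 1 \<and> y j \<in> {-1, 1}"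
begin

definition "N = real (card Np)"
definition "\<kappa> = \<rho> + \<Phi> + 2 * \<eta> * N"
definition "cc i = (1/2) *\<^sub>R (fp + fn i)"
definition "mu \<epsilon> = lam + (CR / (2 * real B)) *\<^sub>R \<epsilon>"
definition "obj \<epsilon> = objective L R CR B \<rho> \<eta> \<Phi> Np fp fn x y (mu \<epsilon>)"
definition "gradR f = (\<Sum>b\<in>Basis. D1 f b *\<^sub>R b)"
definition "hessR f v = (\<Sum>b\<in>Basis. D2 f v b *\<^sub>R b)"
definition "Hd f = (CR / real B) *\<^sub>R (\<Sum>j<B. (L1 (y j * (f \<bullet> x j)) * y j) *\<^sub>R x j)
   + \<rho> *\<^sub>R gradR f + \<Phi> *\<^sub>R f + (2 * \<eta>) *\<^sub>R (\<Sum>i\<in>Np. f - cc i) + 2 *\<^sub>R lam"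
definition "grad \<epsilon> f = Hd f + (CR / real B) *\<^sub>R \<epsilon>"
definition "g f = (- (real B / CR)) *\<^sub>R Hd f"
definition "Mout \<epsilon> = arg_min (obj \<epsilon>) (\<lambda>_. True)"

lemma kappa_pos: "\<kappa> > 0" using kap by (simp add: \<kappa>_def N_def)
lemma Bpos': "real B > 0" using Bpos by simp

lemma gradR_inner: "gradR f \<bullet> v = D1 f v"
proof -
  have "gradR f \<bullet> v = (\<Sum>b\<in>Basis. D1 f b * (b \<bullet> v))"
    by (simp add: gradR_def inner_sum_left)
  also have "\<dots> = (\<Sum>b\<in>Basis. D1 f b * (v \<bullet> b))"
    by (simp add: inner_commute)
  also have "\<dots> = D1 f (\<Sum>b\<in>Basis. (v \<bullet> b) *\<^sub>R b)"
    by (simp add: blinfun.sum_right blinfun.scaleR_right mult.commute)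
  also have "\<dots> = D1 f v" by (simp add: euclidean_representation)
  finally show ?thesis .
qed

lemma hessR_inner: "hessR f v \<bullet> w = D2 f v w"
proof -
  have "hessR f v \<bullet> w = (\<Sum>b\<in>Basis. D2 f v b * (b \<bullet> w))"
    by (simp add: hessR_def inner_sum_left)
  also have "\<dots> = (\<Sum>b\<in>Basis. D2 f v b * (w \<bullet> b))"
    by (simp add: inner_commute)
  also have "\<dots> = D2 f v (\<Sum>b\<in>Basis. (w \<bullet> b) *\<^sub>R b)"
    by (simp add: blinfun.sum_right blinfun.scaleR_right mult.commute)
  also have "\<dots> = D2 f v w" by (simp add: euclidean_representation)
  finally show ?thesis .
qed

lemma grad_inner: "grad \<epsilon> f \<bullet> w = CR / real B * (\<Sum>j<B. L1 (y j * (f \<bullet> x j)) * (y j * (x j \<bullet> w)))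
   + \<rho> * D1 f w + \<Phi> * (f \<bullet> w) + 2 * \<eta> * (\<Sum>i\<in>Np. (f - cc i) \<bullet> w) + 2 * (lam \<bullet> w)
   + CR / real B * (\<epsilon> \<bullet> w)"
  by (simp add: grad_def Hd_def inner_add_left inner_sum_left gradR_inner sum_distrib_left mult_ac)

lemma obj_unfold: "obj \<epsilon> f = CR / real B * (\<Sum>j<B. L (y j * (f \<bullet> x j))) + \<rho> * R f + 2 * (mu \<epsilon> \<bullet> f)
     + \<Phi> / 2 * (norm f)\<^sup>2 + \<eta> * (\<Sum>i\<in>Np. (norm (f - cc i))\<^sup>2)"
  by (simp add: obj_def objective_def cc_def)

lemma obj_lower: "obj \<epsilon> f + grad \<epsilon> f \<bullet> (z - f) + (\<kappa> / 2) * (norm (z - f))\<^sup>2 \<le> obj \<epsilon> z"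
proof -
  define X where "X = (norm (z - f))\<^sup>2"
  have P1: "CR / real B * (\<Sum>j<B. L (y j * (f \<bullet> x j))) + CR / real B * (\<Sum>j<B. L1 (y j * (f \<bullet> x j)) * (y j * (x j \<bullet> (z - f))))
      \<le> CR / real B * (\<Sum>j<B. L (y j * (z \<bullet> x j)))"
  proof -
    have "(\<Sum>j<B. L (y j * (f \<bullet> x j))) + (\<Sum>j<B. L1 (y j * (f \<bullet> x j)) * (y j * (x j \<bullet> (z - f))))
        \<le> (\<Sum>j<B. L (y j * (z \<bullet> x j)))"
      unfolding sum.distrib[symmetric]
    proof (intro sum_mono)
      fix j
      show "L (y j * (f \<bullet> x j)) + L1 (y j * (f \<bullet> x j)) * (y j * (x j \<bullet> (z - f))) \<le> L (y j * (z \<bullet> x j))"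
        using Ltan[of "y j * (f \<bullet> x j)" "y j * (z \<bullet> x j)"]
        by (simp add: inner_diff_right inner_commute[of "x j" z] inner_commute[of "x j" f] algebra_simps)
    qed
    then have "CR / real B * ((\<Sum>j<B. L (y j * (f \<bullet> x j))) + (\<Sum>j<B. L1 (y j * (f \<bullet> x j)) * (y j * (x j \<bullet> (z - f)))))
        \<le> CR / real B * (\<Sum>j<B. L (y j * (z \<bullet> x j)))"
      by (rule mult_left_mono) (use CR Bpos' in auto)
    then show ?thesis by (simp only: distrib_left)
  qed
  have P2: "\<rho> * R f + \<rho> * D1 f (z - f) + \<rho> / 2 * X \<le> \<rho> * R z"
    using mult_left_mono[OF Rtan[of f z], of \<rho>] rho by (simp add: X_def algebra_simps)
  have P3: "\<Phi> / 2 * (norm z)\<^sup>2 = \<Phi> / 2 * (norm f)\<^sup>2 + \<Phi> * (f \<bullet> (z - f)) + \<Phi> / 2 * X"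
    by (simp add: X_def power2_norm_eq_inner inner_diff_left inner_diff_right inner_commute algebra_simps)
  have P4: "\<eta> * (\<Sum>i\<in>Np. (norm (z - cc i))\<^sup>2) = \<eta> * (\<Sum>i\<in>Np. (norm (f - cc i))\<^sup>2)
      + 2 * \<eta> * (\<Sum>i\<in>Np. (f - cc i) \<bullet> (z - f)) + \<eta> * N * X"
  proof -
    have "(norm (z - cc i))\<^sup>2 = (norm (f - cc i))\<^sup>2 + 2 * ((f - cc i) \<bullet> (z - f)) + X" for i
      by (simp add: X_def power2_norm_eq_inner inner_diff_left inner_diff_right inner_commute algebra_simps)
    then have "(\<Sum>i\<in>Np. (norm (z - cc i))\<^sup>2) = (\<Sum>i\<in>Np. (norm (f - cc i))\<^sup>2)
      + 2 * (\<Sum>i\<in>Np. (f - cc i) \<bullet> (z - f)) + N * X"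
      by (simp add: sum.distrib sum_distrib_left N_def)
    then show ?thesis by (simp add: algebra_simps)
  qed
  have P5: "2 * (mu \<epsilon> \<bullet> z) = 2 * (mu \<epsilon> \<bullet> f) + 2 * (lam \<bullet> (z - f)) + CR / real B * (\<epsilon> \<bullet> (z - f))"
    using Bpos' by (simp add: mu_def inner_add_left inner_diff_right algebra_simps)
  have K: "\<kappa> / 2 * X = \<rho> / 2 * X + \<Phi> / 2 * X + \<eta> * N * X"
    by (simp add: \<kappa>_def algebra_simps)
  have G: "grad \<epsilon> f \<bullet> (z - f) = CR / real B * (\<Sum>j<B. L1 (y j * (f \<bullet> x j)) * (y j * (x j \<bullet> (z - f))))
   + \<rho> * D1 f (z - f) + \<Phi> * (f \<bullet> (z - f)) + 2 * \<eta> * (\<Sum>i\<in>Np. (f - cc i) \<bullet> (z - f)) + 2 * (lam \<bullet> (z - f))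
   + CR / real B * (\<epsilon> \<bullet> (z - f))"
    by (rule grad_inner)
  show ?thesis
    unfolding obj_unfold G X_def[symmetric] K using P1 P2 P3 P4 P5 by linarith
qed

lemma grad_mono: "\<kappa> * (norm (z - f))\<^sup>2 \<le> (grad \<epsilon> z - grad \<epsilon> f) \<bullet> (z - f)"
proof -
  have "(norm (f - z))\<^sup>2 = (norm (z - f))\<^sup>2" by (simp add: norm_minus_commute)
  moreover have "grad \<epsilon> z \<bullet> (f - z) = - (grad \<epsilon> z \<bullet> (z - f))" by (simp add: inner_diff_right)
  ultimately show ?thesis
    using obj_lower[of \<epsilon> f z] obj_lower[of \<epsilon> z f] by (simp add: inner_diff_left)
qed

lemma L_chain[derivative_intros]:
  "(h has_derivative h') (at z within s) \<Longrightarrow> ((\<lambda>w. L (h w)) has_derivative (\<lambda>v. L1 (h z) * h' v)) (at z within s)"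
  using has_derivative_compose[of h h' z s L "(*) (L1 (h z))"] L1[of "h z"]
  by (simp add: has_field_derivative_def)

lemma R_chain[derivative_intros]:
  "(h has_derivative h') (at z within s) \<Longrightarrow> ((\<lambda>w. R (h w)) has_derivative (\<lambda>v. D1 (h z) (h' v))) (at z within s)"
  using has_derivative_compose[of h h' z s R "D1 (h z)"] D1[of "h z"] by simp

lemma obj_deriv: "(obj \<epsilon> has_derivative (\<lambda>w. grad \<epsilon> f \<bullet> w)) (at f)"
proof -
  have e: "obj \<epsilon> = (\<lambda>f. CR / real B * (\<Sum>j<B. L (y j * (f \<bullet> x j))) + \<rho> * R f + 2 * (mu \<epsilon> \<bullet> f)
     + \<Phi> / 2 * (f \<bullet> f) + \<eta> * (\<Sum>i\<in>Np. (f - cc i) \<bullet> (f - cc i)))"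
    by (simp add: fun_eq_iff obj_unfold power2_norm_eq_inner)
  show ?thesis unfolding e
    apply (rule has_derivative_eq_rhs)
     apply (rule derivative_eq_intros refl | simp)+
    apply (rule ext)
    apply (subst grad_inner)
    apply (simp add: mu_def inner_add_left inner_commute sum.distrib sum_distrib_left sum_divide_distrib algebra_simps)
    done
qed

lemma obj_cont: "continuous_on UNIV (obj \<epsilon>)"
  by (meson continuous_at_imp_continuous_on has_derivative_continuous obj_deriv)

lemma obj_min_exists: "\<exists>f. \<forall>z. obj \<epsilon> f \<le> obj \<epsilon> z"
proof -
  define r where "r = 2 * norm (grad \<epsilon> 0) / \<kappa> + 1"
  have "0 \<le> 2 * norm (grad \<epsilon> 0) / \<kappa>" using kappa_pos by simp
  then have r0: "r > 0" unfolding r_def by linarith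
  obtain f where f: "f \<in> cball 0 r" "\<And>z. z \<in> cball 0 r \<Longrightarrow> obj \<epsilon> f \<le> obj \<epsilon> z"
    using continuous_attains_inf[of "cball 0 r" "obj \<epsilon>"] r0 obj_cont
    by (metis compact_cball continuous_on_subset top_greatest cball_eq_empty not_less order_less_imp_le)
  have "obj \<epsilon> f \<le> obj \<epsilon> z" for z
  proof (cases "z \<in> cball 0 r")
    case True then show ?thesis using f by blast
  next
    case False
    then have nz: "norm z > r" by (simp add: dist_norm)
    have "norm (grad \<epsilon> 0) < \<kappa> / 2 * norm z"
    proof -
      have "2 * norm (grad \<epsilon> 0) / \<kappa> < norm z" using nz r_def by simp
      then show ?thesis using kappa_pos by (simp add: field_simps)
    qed
    then have "norm (grad \<epsilon> 0) * norm z \<le> \<kappa> / 2 * norm z * norm z"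
      by (intro mult_right_mono) auto
    moreover have "- (norm (grad \<epsilon> 0) * norm z) \<le> grad \<epsilon> 0 \<bullet> z"
      using norm_cauchy_schwarz[of "- grad \<epsilon> 0" z] by simp
    ultimately have "0 \<le> grad \<epsilon> 0 \<bullet> (z - 0) + (\<kappa> / 2) * (norm (z - 0))\<^sup>2"
      by (simp add: power2_eq_square algebra_simps)
    then have "obj \<epsilon> 0 \<le> obj \<epsilon> z" using obj_lower[of \<epsilon> 0 z] by linarith
    moreover have "obj \<epsilon> f \<le> obj \<epsilon> 0" using f(2)[of 0] r0 by simp
    ultimately show ?thesis by linarith
  qed
  then show ?thesis by blast
qed

lemma grad_zero_at_min:
  assumes "\<forall>z. obj \<epsilon> f \<le> obj \<epsilon> z"
  shows "grad \<epsilon> f = 0"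
proof -
  have "(\<lambda>w. grad \<epsilon> f \<bullet> w) = (\<lambda>h. 0)"
    by (rule has_derivative_local_min[OF obj_deriv]) (use assms in auto)
  then have "grad \<epsilon> f \<bullet> grad \<epsilon> f = 0" by metis
  then show ?thesis by simp
qed

lemma unique_min:
  assumes "grad \<epsilon> f = 0" "z \<noteq> f"
  shows "obj \<epsilon> f < obj \<epsilon> z"
proof -
  have "0 < (\<kappa> / 2) * (norm (z - f))\<^sup>2" using kappa_pos assms(2) by simp
  then show ?thesis using obj_lower[of \<epsilon> f z] assms(1) by simp
qed

lemma Mout_eq:
  assumes "grad \<epsilon> f = 0"
  shows "Mout \<epsilon> = f"
proof -
  have isf: "is_arg_min (obj \<epsilon>) (\<lambda>_. True) f"
    using unique_min[OF assms] unfolding is_arg_min_def by (metis less_asym less_irrefl)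
  have "\<And>z. is_arg_min (obj \<epsilon>) (\<lambda>_. True) z \<Longrightarrow> z = f"
    using unique_min[OF assms] by (auto simp: is_arg_min_def)
  then show ?thesis unfolding Mout_def arg_min_def using isf by (rule some_equality[rotated])
qed

lemma grad_g: "grad \<epsilon> f = 0 \<longleftrightarrow> g f = \<epsilon>"
proof -
  have "grad \<epsilon> f = 0 \<longleftrightarrow> (CR / real B) *\<^sub>R \<epsilon> = - Hd f" unfolding grad_def
    by (metis add.commute add_eq_0_iff)
  also have "\<dots> \<longleftrightarrow> \<epsilon> = (- (real B / CR)) *\<^sub>R Hd f"
  proof
    assume h: "(CR / real B) *\<^sub>R \<epsilon> = - Hd f"
    have "\<epsilon> = (real B / CR) *\<^sub>R ((CR / real B) *\<^sub>R \<epsilon>)" using CR Bpos' by simp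
    also have "\<dots> = (- (real B / CR)) *\<^sub>R Hd f" unfolding h by simp
    finally show "\<epsilon> = (- (real B / CR)) *\<^sub>R Hd f" .
  next
    assume h: "\<epsilon> = (- (real B / CR)) *\<^sub>R Hd f"
    show "(CR / real B) *\<^sub>R \<epsilon> = - Hd f" unfolding h using CR Bpos' by simp
  qed
  finally show ?thesis unfolding g_def by auto
qed

lemma g_Mout: "g (Mout \<epsilon>) = \<epsilon>"
proof -
  obtain f where f: "\<forall>z. obj \<epsilon> f \<le> obj \<epsilon> z" using obj_min_exists by blast
  have gr: "grad \<epsilon> f = 0" by (rule grad_zero_at_min[OF f])
  then have "Mout \<epsilon> = f" by (rule Mout_eq)
  then show ?thesis using gr grad_g by simp
qed

lemma Mout_g: "Mout (g f) = f"
  by (rule Mout_eq) (simp add: grad_g)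

lemma inj_g: "inj g"
  by (metis Mout_g injI)

lemma g_lower: "\<kappa> * real B / CR * norm (z - f) \<le> norm (g z - g f)"
proof -
  have "\<kappa> * (norm (z - f))\<^sup>2 \<le> (Hd z - Hd f) \<bullet> (z - f)"
    using grad_mono[of z f 0] by (simp add: grad_def)
  also have "\<dots> \<le> norm (Hd z - Hd f) * norm (z - f)" by (rule norm_cauchy_schwarz)
  also have "norm (Hd z - Hd f) = CR / real B * norm (g z - g f)"
  proof -
    have "g z - g f = (- (real B / CR)) *\<^sub>R (Hd z - Hd f)" by (simp add: g_def algebra_simps)
    then have "norm (g z - g f) = real B / CR * norm (Hd z - Hd f)" using CR by simp
    then show ?thesis using CR Bpos' by (simp add: field_simps)
  qed
  finally have "\<kappa> * (norm (z - f))\<^sup>2 \<le> CR / real B * norm (g z - g f) * norm (z - f)" .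
  then have "\<kappa> * norm (z - f) \<le> CR / real B * norm (g z - g f)"
    by (cases "norm (z - f) = 0") (auto simp: power2_eq_square mult.assoc[symmetric] intro: mult_right_le_imp_le)
  then show ?thesis using CR Bpos' by (simp add: field_simps)
qed

lemma Mout_lipschitz: "norm (Mout e - Mout e') \<le> CR / (\<kappa> * real B) * norm (e - e')"
proof -
  have "\<kappa> * real B / CR * norm (Mout e - Mout e') \<le> norm (e - e')"
    using g_lower[of "Mout e" "Mout e'"] by (simp add: g_Mout)
  then show ?thesis using CR Bpos' kappa_pos by (simp add: field_simps)
qed

lemma Mout_cont: "continuous_on UNIV Mout"
proof (rule continuous_onI)
  fix e d :: real and a assume d: "d > 0"
  define c where "c = CR / (\<kappa> * real B)"
  have c: "c > 0" using CR Bpos' kappa_pos by (simp add: c_def)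
  show "\<exists>r>0. \<forall>x'\<in>UNIV. dist x' a < r \<longrightarrow> dist (Mout x') (Mout a) \<le> d"
  proof (intro exI[of _ "d / c"] conjI ballI impI)
    show "d / c > 0" using d c by simp
    fix x' assume "dist x' a < d / c"
    then have "c * dist x' a \<le> d" using c by (simp add: field_simps)
    moreover have "dist (Mout x') (Mout a) \<le> c * dist x' a"
      using Mout_lipschitz[of x' a] by (simp add: dist_norm c_def)
    ultimately show "dist (Mout x') (Mout a) \<le> d" by linarith
  qed
qed

lemma Mout_meas[measurable]: "Mout \<in> borel_measurable borel"
  by (rule borel_measurable_continuous_onI[OF Mout_cont])

end

context mech begin

definition "g' f v = (- (real B / CR)) *\<^sub>R ((CR / real B) *\<^sub>R (\<Sum>j<B. (L2 (y j * (f \<bullet> x j)) * (y j * (v \<bullet> x j)) * y j) *\<^sub>R x j)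
   + \<rho> *\<^sub>R hessR f v + \<Phi> *\<^sub>R v + (2 * \<eta>) *\<^sub>R (\<Sum>i\<in>Np. v))"

lemma L1_chain[derivative_intros]:
  "(h has_derivative h') (at z within s) \<Longrightarrow> ((\<lambda>w. L1 (h w)) has_derivative (\<lambda>v. L2 (h z) * h' v)) (at z within s)"
  using has_derivative_compose[of h h' z s L1 "(*) (L2 (h z))"] L2[of "h z"]
  by (simp add: has_field_derivative_def)

lemma gradR_deriv: "(gradR has_derivative hessR f) (at f)"
proof -
  have "((\<lambda>f. D1 f b) has_derivative (\<lambda>v. D2 f v b)) (at f)" for b
    using bounded_linear.has_derivative[OF blinfun.bounded_linear_left[of b] D2[of f]] .
  then have "((\<lambda>f. \<Sum>b\<in>Basis. D1 f b *\<^sub>R b) has_derivative (\<lambda>v. \<Sum>b\<in>Basis. D2 f v b *\<^sub>R b)) (at f)"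
    by (intro has_derivative_sum has_derivative_scaleR_left) auto
  then show ?thesis unfolding gradR_def[abs_def] hessR_def[abs_def] .
qed

lemma gradR_chain[derivative_intros]:
  "(h has_derivative h') (at z within s) \<Longrightarrow> ((\<lambda>w. gradR (h w)) has_derivative (\<lambda>v. hessR (h z) (h' v))) (at z within s)"
  using has_derivative_compose[of h h' z s gradR "hessR (h z)"] gradR_deriv[of "h z"] by simp

lemma g_deriv: "(g has_derivative g' f) (at f)"
proof -
  have e: "g = (\<lambda>f. (- (real B / CR)) *\<^sub>R ((CR / real B) *\<^sub>R (\<Sum>j<B. (L1 (y j * (f \<bullet> x j)) * y j) *\<^sub>R x j)
   + \<rho> *\<^sub>R gradR f + \<Phi> *\<^sub>R f + (2 * \<eta>) *\<^sub>R (\<Sum>i\<in>Np. f - cc i) + 2 *\<^sub>R lam))"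
    by (simp add: fun_eq_iff g_def Hd_def)
  show ?thesis unfolding e
    apply (rule has_derivative_eq_rhs)
     apply (rule derivative_eq_intros refl | simp)+
    apply (rule ext)
    apply (simp add: g'_def)
    done
qed

definition "Mk k f v = (\<Sum>j\<in>{..<B}-{k}. (L2 (y j * (f \<bullet> x j)) * (x j \<bullet> v)) *\<^sub>R x j)
   + (real B / CR) *\<^sub>R (\<rho> *\<^sub>R hessR f v + (\<Phi> + 2 * \<eta> * N) *\<^sub>R v)"

lemma ysq: "j < B \<Longrightarrow> y j * y j = 1"
  using data[of j] by auto

lemma g'_struct:
  assumes k: "k < B"
  shows "g' f v = (-1) *\<^sub>R (Mk k f v + (L2 (y k * (f \<bullet> x k)) * (x k \<bullet> v)) *\<^sub>R x k)"
proof -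
  have s1: "(\<Sum>j<B. (L2 (y j * (f \<bullet> x j)) * (y j * (v \<bullet> x j)) * y j) *\<^sub>R x j)
      = (\<Sum>j<B. (L2 (y j * (f \<bullet> x j)) * (x j \<bullet> v)) *\<^sub>R x j)"
  proof (rule sum.cong[OF refl])
    fix j assume "j \<in> {..<B}"
    then have "y j * y j = 1" using ysq by simp
    then have "L2 (y j * (f \<bullet> x j)) * (y j * (v \<bullet> x j)) * y j = L2 (y j * (f \<bullet> x j)) * (x j \<bullet> v)"
    proof -
      assume yy: "y j * y j = 1"
      have "L2 (y j * (f \<bullet> x j)) * (y j * (v \<bullet> x j)) * y j = L2 (y j * (f \<bullet> x j)) * (v \<bullet> x j) * (y j * y j)"
        by (simp only: mult_ac)
      also have "\<dots> = L2 (y j * (f \<bullet> x j)) * (x j \<bullet> v)" using yy by (simp add: inner_commute[of v "x j"])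
      finally show ?thesis .
    qed
    then show "(L2 (y j * (f \<bullet> x j)) * (y j * (v \<bullet> x j)) * y j) *\<^sub>R x j = (L2 (y j * (f \<bullet> x j)) * (x j \<bullet> v)) *\<^sub>R x j"
      by simp
  qed
  have s2: "(\<Sum>j<B. (L2 (y j * (f \<bullet> x j)) * (x j \<bullet> v)) *\<^sub>R x j)
      = (\<Sum>j\<in>{..<B}-{k}. (L2 (y j * (f \<bullet> x j)) * (x j \<bullet> v)) *\<^sub>R x j) + (L2 (y k * (f \<bullet> x k)) * (x k \<bullet> v)) *\<^sub>R x k"
    using k by (simp add: sum.remove[of "{..<B}" k] add.commute)
  have s3: "(\<Sum>i\<in>Np. v) = N *\<^sub>R v" by (simp add: N_def sum_constant_scaleR)
  show ?thesis
  proof -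
    define S' where "S' = (\<Sum>j\<in>{..<B}-{k}. (L2 (y j * (f \<bullet> x j)) * (x j \<bullet> v)) *\<^sub>R x j)"
    define ax where "ax = (L2 (y k * (f \<bullet> x k)) * (x k \<bullet> v)) *\<^sub>R x k"
    define Z where "Z = \<rho> *\<^sub>R hessR f v + (\<Phi> + 2 * \<eta> * N) *\<^sub>R v"
    have z: "\<rho> *\<^sub>R hessR f v + \<Phi> *\<^sub>R v + (2 * \<eta>) *\<^sub>R (N *\<^sub>R v) = Z"
      by (simp add: Z_def scaleR_add_left)
    have c: "(- (real B / CR)) *\<^sub>R ((CR / real B) *\<^sub>R W) = - W" for W :: 'd using CR Bpos' by simp
    have "g' f v = (- (real B / CR)) *\<^sub>R ((CR / real B) *\<^sub>R (S' + ax) + Z)"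
      unfolding g'_def s1 s2 s3 S'_def[symmetric] ax_def[symmetric] z[symmetric] by (simp add: add.assoc)
    also have "\<dots> = - (S' + ax) + (- (real B / CR)) *\<^sub>R Z" by (subst scaleR_add_right, subst c) simp
    also have "\<dots> = (-1) *\<^sub>R (Mk k f v + ax)" by (simp add: Mk_def S'_def[symmetric] Z_def[symmetric])
    finally show ?thesis by (simp add: ax_def)
  qed
qed

lemma Mk_linear: "linear (Mk k f)"
proof -
  have "linear (hessR f)"
    by (rule linearI) (simp_all add: hessR_def blinfun.add_right blinfun.add_left blinfun.scaleR_left blinfun.scaleR_right
        scaleR_add_left sum.distrib scaleR_sum_right)
  then show ?thesis unfolding Mk_def[abs_def]
  proof (intro linearI)
    fix u w :: 'd and r :: real
    assume lh: "linear (hessR f)"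
    show "(\<Sum>j\<in>{..<B} - {k}. (L2 (y j * (f \<bullet> x j)) * (x j \<bullet> (u + w))) *\<^sub>R x j) +
         (real B / CR) *\<^sub>R (\<rho> *\<^sub>R hessR f (u + w) + (\<Phi> + 2 * \<eta> * N) *\<^sub>R (u + w)) =
         (\<Sum>j\<in>{..<B} - {k}. (L2 (y j * (f \<bullet> x j)) * (x j \<bullet> u)) *\<^sub>R x j) +
         (real B / CR) *\<^sub>R (\<rho> *\<^sub>R hessR f u + (\<Phi> + 2 * \<eta> * N) *\<^sub>R u) +
         ((\<Sum>j\<in>{..<B} - {k}. (L2 (y j * (f \<bullet> x j)) * (x j \<bullet> w)) *\<^sub>R x j) +
          (real B / CR) *\<^sub>R (\<rho> *\<^sub>R hessR f w + (\<Phi> + 2 * \<eta> * N) *\<^sub>R w))"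
      using linear_add[OF lh, of u w]
      by (simp add: inner_add_right distrib_left scaleR_add_left sum.distrib scaleR_add_right algebra_simps)
    show "(\<Sum>j\<in>{..<B} - {k}. (L2 (y j * (f \<bullet> x j)) * (x j \<bullet> r *\<^sub>R u)) *\<^sub>R x j) +
         (real B / CR) *\<^sub>R (\<rho> *\<^sub>R hessR f (r *\<^sub>R u) + (\<Phi> + 2 * \<eta> * N) *\<^sub>R (r *\<^sub>R u)) =
         r *\<^sub>R ((\<Sum>j\<in>{..<B} - {k}. (L2 (y j * (f \<bullet> x j)) * (x j \<bullet> u)) *\<^sub>R x j) +
              (real B / CR) *\<^sub>R (\<rho> *\<^sub>R hessR f u + (\<Phi> + 2 * \<eta> * N) *\<^sub>R u))"
      using linear_scale[OF lh, of r u]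
      by (simp add: scaleR_sum_right scaleR_add_right mult_ac)
  qed
qed

lemma Mk_pd: "real B / CR * \<kappa> * (norm v)\<^sup>2 \<le> v \<bullet> Mk k f v"
proof -
  have t1: "0 \<le> v \<bullet> (\<Sum>j\<in>{..<B}-{k}. (L2 (y j * (f \<bullet> x j)) * (x j \<bullet> v)) *\<^sub>R x j)"
    unfolding inner_sum_right
  proof (intro sum_nonneg)
    fix j
    have c: "v \<bullet> x j = x j \<bullet> v" by (rule inner_commute)
    have E: "v \<bullet> ((L2 (y j * (f \<bullet> x j)) * (x j \<bullet> v)) *\<^sub>R x j) = L2 (y j * (f \<bullet> x j)) * ((x j \<bullet> v) * (x j \<bullet> v))"
      by (simp add: c mult.assoc)
    show "0 \<le> v \<bullet> ((L2 (y j * (f \<bullet> x j)) * (x j \<bullet> v)) *\<^sub>R x j)"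
      unfolding E by (rule mult_nonneg_nonneg) (use L2b in auto)
  qed
  have "\<rho> * (norm v)\<^sup>2 \<le> \<rho> * D2 f v v" using Rhess rho by (simp add: mult_left_mono)
  then have "\<kappa> * (norm v)\<^sup>2 \<le> v \<bullet> (\<rho> *\<^sub>R hessR f v + (\<Phi> + 2 * \<eta> * N) *\<^sub>R v)"
  proof -
    have e: "v \<bullet> (\<rho> *\<^sub>R hessR f v + (\<Phi> + 2 * \<eta> * N) *\<^sub>R v) = \<rho> * D2 f v v + (\<Phi> + 2 * \<eta> * N) * (norm v)\<^sup>2"
      by (simp add: inner_add_right inner_commute[of v "hessR f v"] hessR_inner power2_norm_eq_inner)
    have "\<kappa> * (norm v)\<^sup>2 = \<rho> * (norm v)\<^sup>2 + (\<Phi> + 2 * \<eta> * N) * (norm v)\<^sup>2" by (simp add: \<kappa>_def algebra_simps)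
    then show ?thesis unfolding e using \<open>\<rho> * (norm v)\<^sup>2 \<le> \<rho> * D2 f v v\<close> by linarith
  qed
  then have "real B / CR * (\<kappa> * (norm v)\<^sup>2) \<le> real B / CR * (v \<bullet> (\<rho> *\<^sub>R hessR f v + (\<Phi> + 2 * \<eta> * N) *\<^sub>R v))"
    using CR Bpos' by (intro mult_left_mono) auto
  moreover have "real B / CR * \<kappa> * (norm v)\<^sup>2 = real B / CR * (\<kappa> * (norm v)\<^sup>2)" by simp
  ultimately show ?thesis using t1 unfolding Mk_def inner_add_right inner_scaleR_right by linarith
qed

end

context mech begin

lemma g_cont: "continuous_on UNIV g"
  by (meson continuous_at_imp_continuous_on has_derivative_continuous g_deriv)

lemma g_meas[measurable]: "g \<in> borel_measurable borel"
  by (rule borel_measurable_continuous_onI[OF g_cont])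

lemma L2_meas[measurable]: "L2 \<in> borel_measurable borel"
  by (rule borel_measurable_continuous_onI[OF L2c])

lemma D2_meas[measurable]: "D2 \<in> borel_measurable borel"
  by (rule borel_measurable_continuous_onI[OF D2c])

lemma D2_app_meas[measurable]: "(\<lambda>f. blinfun_apply (blinfun_apply (D2 f) v) b) \<in> borel_measurable borel"
proof -
  have c: "continuous_on UNIV (\<lambda>T::'d \<Rightarrow>\<^sub>L ('d \<Rightarrow>\<^sub>L real). blinfun_apply (blinfun_apply T v) b)"
    by (intro continuous_intros)
  have "(\<lambda>T::'d \<Rightarrow>\<^sub>L ('d \<Rightarrow>\<^sub>L real). blinfun_apply (blinfun_apply T v) b) \<in> borel_measurable borel"
    by (rule borel_measurable_continuous_onI[OF c])
  from measurable_compose[OF D2_meas this] show ?thesis by (simp add: comp_def)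
qed

lemma g'_entry_meas[measurable]: "(\<lambda>f. g' f v \<bullet> w) \<in> borel_measurable borel"
  unfolding g'_def hessR_def by measurable

lemma detd_g'_meas[measurable]: "(\<lambda>f. detd (g' f)) \<in> borel_measurable borel"
  unfolding detd_def det_def vec_lambda_beta by measurable

end

lemma exp_half_nn:
  assumes k: "k > 0"
  shows "(\<integral>\<^sup>+t. ennreal (indicator {0..} t * exp (- k * t)) \<partial>lborel) = ennreal (1 / k)"
  using nn_integral_has_integral_lebesgue[OF _ has_integral_exp_minus_to_infinity[OF k, of 0]]
  by simp

lemma exp_abs_nn_finite:
  assumes k: "k > 0"
  shows "(\<integral>\<^sup>+t. ennreal (exp (- k * \<bar>t\<bar>)) \<partial>lborel) < \<infinity>"
proof -
  define F where "F = (\<lambda>t::real. ennreal (indicator {0..} t * exp (- k * t)))"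
  have Fm[measurable]: "F \<in> borel_measurable borel" unfolding F_def by measurable
  have refl: "(\<integral>\<^sup>+t. F (- t) \<partial>lborel) = (\<integral>\<^sup>+t. F t \<partial>lborel)"
  proof -
    have "(\<integral>\<^sup>+t. F t \<partial>lborel) = (\<integral>\<^sup>+t. F t \<partial>(distr lborel borel uminus))"
      by (simp add: lborel_distr_uminus)
    also have "\<dots> = (\<integral>\<^sup>+t. F (- t) \<partial>lborel)"
      by (rule nn_integral_distr) simp_all
    finally show ?thesis by simp
  qed
  have "(\<integral>\<^sup>+t. ennreal (exp (- k * \<bar>t\<bar>)) \<partial>lborel) \<le> (\<integral>\<^sup>+t. F t + F (- t) \<partial>lborel)"
  proof (intro nn_integral_mono)
    fix t :: real
    show "ennreal (exp (- k * \<bar>t\<bar>)) \<le> F t + F (- t)"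
    proof (cases "t \<ge> 0")
      case True
      then have "ennreal (exp (- k * \<bar>t\<bar>)) = F t" by (simp add: F_def)
      then show ?thesis by (simp add: add_increasing2)
    next
      case False
      then have "ennreal (exp (- k * \<bar>t\<bar>)) = F (- t)" by (simp add: F_def)
      then show ?thesis by (simp add: add_increasing)
    qed
  qed
  also have "\<dots> = (\<integral>\<^sup>+t. F t \<partial>lborel) + (\<integral>\<^sup>+t. F (- t) \<partial>lborel)"
    by (rule nn_integral_add) simp_all
  also have "\<dots> = ennreal (1 / k) + ennreal (1 / k)"
    unfolding refl using exp_half_nn[OF k] by (simp add: F_def)
  also have "\<dots> < \<infinity>" by simp
  finally show ?thesis .
qed

lemma exp_norm_nn_finite:
  assumes c: "c > 0"
  shows "(\<integral>\<^sup>+u. ennreal (exp (- c * norm (u::'a::euclidean_space))) \<partial>lborel) < \<infinity>"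
proof -
  define D where "D = real DIM('a)"
  have D: "D > 0" by (simp add: D_def)
  define k where "k = c / D"
  have k: "k > 0" using c D by (simp add: k_def)
  have "(\<integral>\<^sup>+u. ennreal (exp (- c * norm (u::'a))) \<partial>lborel)
      \<le> (\<integral>\<^sup>+u. (\<Prod>b\<in>Basis. ennreal (exp (- k * \<bar>(u::'a) \<bullet> b\<bar>))) \<partial>lborel)"
  proof (intro nn_integral_mono)
    fix u :: 'a
    have "(\<Sum>b\<in>Basis. \<bar>u \<bullet> b\<bar>) \<le> (\<Sum>b\<in>(Basis::'a set). norm u)"
      by (intro sum_mono Basis_le_norm)
    then have s: "(\<Sum>b\<in>Basis. \<bar>u \<bullet> b\<bar>) \<le> D * norm u" by (simp add: D_def)
    have "k * (\<Sum>b\<in>Basis. \<bar>u \<bullet> b\<bar>) \<le> c * norm u"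
      using mult_left_mono[OF s, of k] k D by (simp add: k_def)
    then have "exp (- c * norm u) \<le> exp (\<Sum>b\<in>Basis. - k * \<bar>u \<bullet> b\<bar>)"
      by (simp add: sum_negf sum_distrib_left[symmetric])
    also have "\<dots> = (\<Prod>b\<in>Basis. exp (- k * \<bar>u \<bullet> b\<bar>))" by (simp add: exp_sum)
    finally show "ennreal (exp (- c * norm u)) \<le> (\<Prod>b\<in>Basis. ennreal (exp (- k * \<bar>u \<bullet> b\<bar>)))"
      by (simp add: prod_ennreal ennreal_leI)
  qed
  also have "\<dots> = (\<Prod>b\<in>(Basis::'a set). (\<integral>\<^sup>+t. ennreal (exp (- k * \<bar>t\<bar>)) \<partial>lborel))"
    by (rule nn_integral_lborel_prod[where f="\<lambda>b t. ennreal (exp (- k * \<bar>t\<bar>))"]) simp_all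
  also have "\<dots> < \<infinity>"
    using exp_abs_nn_finite[OF k] by (simp add: power_less_top_ennreal)
  finally show ?thesis .
qed

lemma exp_norm_integrable:
  assumes c: "c > 0"
  shows "integrable lborel (\<lambda>u::'a::euclidean_space. exp (- c * norm u))"
  by (rule integrableI_nonneg) (use exp_norm_nn_finite[OF c] in auto)

lemma exp_norm_integral_pos:
  assumes c: "c > 0"
  shows "0 < (\<integral>u. exp (- c * norm (u::'a::euclidean_space)) \<partial>lborel)"
proof -
  have ge: "0 \<le> (\<integral>u. exp (- c * norm (u::'a::euclidean_space)) \<partial>lborel)"
    by (rule integral_nonneg_AE) simp
  have ne: "(\<integral>u. exp (- c * norm (u::'a)) \<partial>lborel) \<noteq> 0"
  proof
    assume h: "(\<integral>u. exp (- c * norm (u::'a)) \<partial>lborel) = 0"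
    have "AE u in (lborel::'a measure). False"
      using h integral_nonneg_eq_0_iff_AE[OF exp_norm_integrable[OF c]] by auto
    then have "emeasure (lborel::'a measure) {x \<in> space lborel. \<not> False} = 0"
      by (subst (asm) AE_iff_measurable[OF _ refl]) auto
    then show False by simp
  qed
  show ?thesis using ge ne by linarith
qed

definition pn :: "real \<Rightarrow> 'a::euclidean_space \<Rightarrow> real" where
  "pn a e = exp (- (a / 2) * norm e) / (\<integral>(u::'a). exp (- (a / 2) * norm u) \<partial>lborel)"

lemma noise_eq: "noise_measure a = density lborel (\<lambda>e. ennreal (pn a e))"
  by (simp add: noise_measure_def pn_def)

lemma pn_meas[measurable]: "pn a \<in> borel_measurable borel"
  unfolding pn_def[abs_def] by measurable

lemma Z_pos: "a > 0 \<Longrightarrow> 0 < (\<integral>(u::'a::euclidean_space). exp (- (a / 2) * norm u) \<partial>lborel)"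
  using exp_norm_integral_pos[of "a / 2"] by simp

lemma pn_pos: "a > 0 \<Longrightarrow> pn a e > 0"
  unfolding pn_def using Z_pos by (intro divide_pos_pos) auto

lemma pn_fin:
  assumes a: "a > 0"
  shows "(\<integral>\<^sup>+e. ennreal (pn a (e::'a::euclidean_space)) \<partial>lborel) < \<infinity>"
proof -
  define Z where "Z = (\<integral>(u::'a). exp (- (a / 2) * norm u) \<partial>lborel)"
  have Z: "Z > 0" unfolding Z_def using Z_pos[OF a] .
  have "(\<integral>\<^sup>+e. ennreal (pn a (e::'a)) \<partial>lborel) = (\<integral>\<^sup>+e. ennreal (1 / Z) * ennreal (exp (- (a / 2) * norm (e::'a))) \<partial>lborel)"
  proof (intro nn_integral_cong)
    fix e :: 'a
    have pe: "pn a e = (1 / Z) * exp (- (a / 2) * norm e)" by (simp add: pn_def Z_def)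
    show "ennreal (pn a e) = ennreal (1 / Z) * ennreal (exp (- (a / 2) * norm e))"
      unfolding pe using Z by (intro ennreal_mult) auto
  qed
  also have "\<dots> = ennreal (1 / Z) * (\<integral>\<^sup>+e. ennreal (exp (- (a / 2) * norm (e::'a))) \<partial>lborel)"
    by (rule nn_integral_cmult) simp
  also have "\<dots> < \<infinity>"
  proof -
    have "(\<integral>\<^sup>+e. ennreal (exp (- (a / 2) * norm (e::'a))) \<partial>lborel) < \<infinity>"
      using exp_norm_nn_finite[of "a / 2"] a by simp
    then show ?thesis by (simp add: ennreal_mult_less_top)
  qed
  finally show ?thesis .
qed

context mech begin

lemma Mout_preimage: "Mout -` A = g ` A"
proof (intro equalityI subsetI)
  fix e assume "e \<in> Mout -` A"
  then show "e \<in> g ` A" using g_Mout[of e] by (metis image_eqI vimageD)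
next
  fix e assume "e \<in> g ` A"
  then show "e \<in> Mout -` A" using Mout_g by auto
qed

lemma out_density:
  assumes a: "a > 0"
  shows "distr (noise_measure a) lborel Mout = density lborel (\<lambda>f. ennreal (pn a (g f) * \<bar>detd (g' f)\<bar>))"
proof (rule measure_eqI)
  show "sets (distr (noise_measure a) lborel Mout) = sets (density lborel (\<lambda>f. ennreal (pn a (g f) * \<bar>detd (g' f)\<bar>)))"
    by simp
next
  fix A assume "A \<in> sets (distr (noise_measure a) lborel Mout)"
  then have A: "A \<in> sets borel" by simp
  have Mm: "Mout \<in> measurable (noise_measure a) lborel"
    unfolding noise_eq by simp
  have gA: "g ` A \<in> sets borel"
    unfolding Mout_preimage[symmetric] using measurable_sets[OF Mout_meas A] by simp
  have "emeasure (distr (noise_measure a) lborel Mout) A = emeasure (noise_measure a) (Mout -` A \<inter> space (noise_measure a))"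
    by (rule emeasure_distr[OF Mm]) (simp add: A)
  also have "\<dots> = emeasure (density lborel (\<lambda>e. ennreal (pn a e))) (g ` A)"
    by (simp add: noise_eq Mout_preimage)
  also have "\<dots> = (\<integral>\<^sup>+x. ennreal (pn a x) * indicator (g ` A) x \<partial>lborel)"
    by (rule emeasure_density) (simp_all add: gA)
  also have "\<dots> = (\<integral>\<^sup>+x. ennreal (indicator (g ` A) x * pn a x) \<partial>lborel)"
    by (intro nn_integral_cong) (simp add: indicator_def)
  also have "\<dots> = (\<integral>\<^sup>+x. ennreal (indicator A x * (\<bar>detd (g' x)\<bar> * pn a (g x))) \<partial>lborel)"
  proof (rule cov_d[OF A gA g_deriv inj_g pn_meas _ pn_fin[OF a] detd_g'_meas g_meas])
    show "\<And>x. 0 \<le> pn a x" using pn_pos[OF a] less_imp_le by blast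
  qed
  also have "\<dots> = (\<integral>\<^sup>+x. ennreal (pn a (g x) * \<bar>detd (g' x)\<bar>) * indicator A x \<partial>lborel)"
    by (intro nn_integral_cong) (simp add: indicator_def mult.commute)
  also have "\<dots> = emeasure (density lborel (\<lambda>f. ennreal (pn a (g f) * \<bar>detd (g' f)\<bar>))) A"
    by (rule emeasure_density[symmetric]) (simp_all add: A)
  finally show "emeasure (distr (noise_measure a) lborel Mout) A = emeasure (density lborel (\<lambda>f. ennreal (pn a (g f) * \<bar>detd (g' f)\<bar>))) A" .
qed

end

lemma final_numeric:
  fixes B n :: nat
  assumes al: "\<alpha> > 0" and c1: "c1 > 0" and CR: "CR > 0" and B: "B \<ge> 1" and rho: "\<rho> > 0" and eta: "\<eta> > 0"
  defines "\<Phi> \<equiv> Phi \<alpha> c1 CR B \<rho> \<eta> n" and "a \<equiv> alpha_hat \<alpha> c1 CR B \<rho> \<eta> n"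
  shows "a > 0" "\<rho> + \<Phi> + 2 * \<eta> * real n > 0"
    "exp a * (1 + c1 * CR / (real B * (\<rho> + \<Phi> + 2 * \<eta> * real n))) \<le> exp \<alpha>"
proof -
  have Bp: "real B > 0" using B by simp
  define X where "X = c1 * CR / (real B * (\<rho> + 2 * \<eta> * real n))"
  have den: "\<rho> + 2 * \<eta> * real n > 0" using rho eta by (simp add: add_pos_nonneg)
  have X: "X > 0" unfolding X_def using c1 CR Bp den by simp
  have "(a > 0 \<and> \<rho> + \<Phi> + 2 * \<eta> * real n > 0 \<and>
    exp a * (1 + c1 * CR / (real B * (\<rho> + \<Phi> + 2 * \<eta> * real n))) \<le> exp \<alpha>)"
  proof (cases "alpha_hat0 \<alpha> c1 CR B \<rho> \<eta> n > 0")
    case True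
    then have a: "a = \<alpha> - 2 * ln (1 + X)" and P: "\<Phi> = 0"
      by (simp_all add: a_def alpha_hat_def \<Phi>_def Phi_def alpha_hat0_def X_def)
    have apos: "a > 0" using True by (simp add: a_def alpha_hat_def)
    have l2: "2 * ln (1 + X) = ln ((1 + X)\<^sup>2)" using X by (simp add: ln_realpow)
    have "exp (2 * ln (1 + X)) = (1 + X)\<^sup>2" unfolding l2 using X by simp
    then have "exp a = exp \<alpha> / (1 + X)\<^sup>2"
      by (simp add: a exp_diff)
    moreover have "exp \<alpha> / (1 + X)\<^sup>2 * (1 + X) = exp \<alpha> / (1 + X)"
      using X by (simp add: power2_eq_square)
    ultimately have "exp a * (1 + X) = exp \<alpha> / (1 + X)" by simp
    also have "\<dots> \<le> exp \<alpha>" using X by (simp add: divide_le_eq)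
    finally have "exp a * (1 + X) \<le> exp \<alpha>" .
    then show ?thesis using apos den by (simp add: P X_def)
  next
    case False
    define Y where "Y = c1 * CR / (real B * (exp (\<alpha> / 4) - 1))"
    have e4: "exp (\<alpha> / 4) > 1" using al by simp
    have Y: "Y > 0" unfolding Y_def using c1 CR Bp e4 by simp
    have a: "a = \<alpha> / 2" and P: "\<Phi> = Y - \<rho> - 2 * \<eta> * real n"
      using False by (simp_all add: a_def alpha_hat_def \<Phi>_def Phi_def Y_def)
    have k: "\<rho> + \<Phi> + 2 * \<eta> * real n = Y" by (simp add: P)
    have "c1 * CR / (real B * Y) = exp (\<alpha> / 4) - 1"
      unfolding Y_def using c1 CR Bp e4 by (simp add: field_simps)
    then have "exp a * (1 + c1 * CR / (real B * (\<rho> + \<Phi> + 2 * \<eta> * real n))) = exp (\<alpha> / 2) * exp (\<alpha> / 4)"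
      by (simp add: k a)
    also have "\<dots> = exp (3 * \<alpha> / 4)" by (simp add: exp_add[symmetric])
    also have "\<dots> \<le> exp \<alpha>" using al by simp
    finally show ?thesis using Y al by (simp add: k a)
  qed
  then show "a > 0" "\<rho> + \<Phi> + 2 * \<eta> * real n > 0"
    "exp a * (1 + c1 * CR / (real B * (\<rho> + \<Phi> + 2 * \<eta> * real n))) \<le> exp \<alpha>" by auto
qed

lemma pn_ratio:
  assumes a: "a > 0" and d: "norm (e1 - e2) \<le> 2"
  shows "pn a e1 \<le> exp a * pn a (e2::'a::euclidean_space)"
proof -
  define Z where "Z = (\<integral>(u::'a). exp (- (a / 2) * norm u) \<partial>lborel)"
  have Z: "Z > 0" unfolding Z_def using Z_pos[OF a] .
  have "norm e2 \<le> norm e1 + norm (e1 - e2)" by (metis norm_triangle_sub add.commute norm_minus_commute)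
  then have "norm e2 - 2 \<le> norm e1" using d by linarith
  then have "a * (norm e2 - 2) \<le> a * norm e1" using a by (intro mult_left_mono) auto
  then have "- (a / 2) * norm e1 \<le> a + - (a / 2) * norm e2" by (simp add: algebra_simps)
  then have "exp (- (a / 2) * norm e1) \<le> exp a * exp (- (a / 2) * norm e2)"
    by (simp add: exp_add[symmetric])
  then have "exp (- (a / 2) * norm e1) / Z \<le> exp a * exp (- (a / 2) * norm e2) / Z"
    using Z by (simp add: divide_right_mono)
  then show ?thesis unfolding pn_def Z_def[symmetric] by (simp only: times_divide_eq_right)
qed

theorem theorem1:
  fixes L :: "real \<Rightarrow> real" and R :: "'d::euclidean_space \<Rightarrow> real"
    and c1 \<alpha> CR \<rho> \<eta> :: real and B :: nat and Np :: "'n set"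
    and lam fp :: 'd and fn :: "'n \<Rightarrow> 'd"
    and x x' :: "nat \<Rightarrow> 'd" and y y' :: "nat \<Rightarrow> real"
  assumes L_convex: "strictly_convex L" and L_C2: "C2_real L"
    and L_bounds: "\<forall>t. \<bar>deriv L t\<bar> \<le> 1 \<and> \<bar>deriv (deriv L) t\<bar> \<le> c1" and c1_pos: "c1 > 0"
    and R_C2: "C2_fun R" and R_strong: "strongly_convex 1 R"
    and Np_fin: "finite Np" and Np_ne: "card Np \<ge> 1"
    and B_pos: "B \<ge> 1" and CR_pos: "CR > 0" and rho_pos: "\<rho> > 0" and eta_pos: "\<eta> > 0"
    and alpha_pos: "\<alpha> > 0"
    and data: "\<forall>j<B. norm (x j) \<le> 1 \<and> y j \<in> {-1, 1}"
    and data': "\<forall>j<B. norm (x' j) \<le> 1 \<and> y' j \<in> {-1, 1}"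
    and nb: "neighboring B x y x' y'"
  shows "\<exists>Q Q'. Q \<in> borel_measurable lborel \<and> Q' \<in> borel_measurable lborel
     \<and> output_distribution L R c1 \<alpha> CR B \<rho> \<eta> Np lam fp fn x y = density lborel (\<lambda>f. ennreal (Q f))
     \<and> output_distribution L R c1 \<alpha> CR B \<rho> \<eta> Np lam fp fn x' y' = density lborel (\<lambda>f. ennreal (Q' f))
     \<and> (\<forall>f. Q f \<ge> 0 \<and> Q' f > 0 \<and> Q f / Q' f \<le> exp \<alpha>)"
proof -
  obtain L1 L2 where L1: "\<And>t. (L has_real_derivative L1 t) (at t)"
      and L2: "\<And>t. (L1 has_real_derivative L2 t) (at t)" and L2c: "continuous_on UNIV L2"
    using L_C2 unfolding C2_real_def by blast
  have dL: "deriv L = L1" using L1 DERIV_imp_deriv by blast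
  have dL1: "deriv L1 = L2" using L2 DERIV_imp_deriv by blast
  have L1b: "\<And>t. \<bar>L1 t\<bar> \<le> 1" using L_bounds dL by metis
  have L2b: "\<And>t. 0 \<le> L2 t \<and> L2 t \<le> c1"
    using L_bounds dL dL1 L2_nonneg[OF L_convex L1 L2] by (metis abs_le_D1)
  have Ltan: "\<And>s t. L t + L1 t * (s - t) \<le> L s" using L_tangent[OF L_convex L1] by blast
  obtain D1 D2 where D1: "\<And>z. (R has_derivative blinfun_apply (D1 z)) (at z)"
      and D2: "\<And>z. (D1 has_derivative blinfun_apply (D2 z)) (at z)" and D2c: "continuous_on UNIV D2"
    using R_C2 unfolding C2_fun_def by blast
  have Rtan: "\<And>f z. R f + D1 f (z - f) + (1/2) * (norm (z - f))\<^sup>2 \<le> R z"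
    using R_tangent[OF R_strong D1] by blast
  have Rhess: "\<And>f v. (norm v)\<^sup>2 \<le> D2 f v v"
    using R_hess[OF R_strong D1 D2] by blast
  define \<Phi> where "\<Phi> = Phi \<alpha> c1 CR B \<rho> \<eta> (card Np)"
  define a where "a = alpha_hat \<alpha> c1 CR B \<rho> \<eta> (card Np)"
  note num = final_numeric[OF alpha_pos c1_pos CR_pos B_pos rho_pos eta_pos, of "card Np",
      folded \<Phi>_def a_def]
  have kap: "\<rho> + \<Phi> + 2 * \<eta> * real (card Np) > 0" using num(2) .
  have apos: "a > 0" using num(1) .
  interpret M1: mech L L1 L2 R D1 D2 c1 CR \<rho> \<eta> \<Phi> B Np lam fp fn x y
    by unfold_locales (use L1 L2 L2c Ltan L1b L2b D1 D2 D2c Rtan Rhess B_pos CR_pos rho_pos eta_pos Np_fin kap data in auto)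
  interpret M2: mech L L1 L2 R D1 D2 c1 CR \<rho> \<eta> \<Phi> B Np lam fp fn x' y'
    by unfold_locales (use L1 L2 L2c Ltan L1b L2b D1 D2 D2c Rtan Rhess B_pos CR_pos rho_pos eta_pos Np_fin kap data' in auto)
  have mo1: "mechanism_output L R c1 \<alpha> CR B \<rho> \<eta> Np lam fp fn x y = M1.Mout"
    unfolding M1.Mout_def[abs_def] M1.obj_def[abs_def] M1.mu_def[abs_def]
    unfolding mechanism_output_def Let_def \<Phi>_def ..
  have mo2: "mechanism_output L R c1 \<alpha> CR B \<rho> \<eta> Np lam fp fn x' y' = M2.Mout"
    unfolding M2.Mout_def[abs_def] M2.obj_def[abs_def] M2.mu_def[abs_def]
    unfolding mechanism_output_def Let_def \<Phi>_def ..
  have od1: "output_distribution L R c1 \<alpha> CR B \<rho> \<eta> Np lam fp fn x y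
      = density lborel (\<lambda>f. ennreal (pn a (M1.g f) * \<bar>detd (M1.g' f)\<bar>))"
    unfolding output_distribution_def mo1 a_def[symmetric] by (rule M1.out_density[OF apos])
  have od2: "output_distribution L R c1 \<alpha> CR B \<rho> \<eta> Np lam fp fn x' y'
      = density lborel (\<lambda>f. ennreal (pn a (M2.g f) * \<bar>detd (M2.g' f)\<bar>))"
    unfolding output_distribution_def mo2 a_def[symmetric] by (rule M2.out_density[OF apos])
  obtain k where kset: "{j. j < B \<and> (x j, y j) \<noteq> (x' j, y' j)} = {k}"
    using nb unfolding neighboring_def by (meson card_1_singletonE)
  have k: "k < B" using kset by auto
  have same: "\<And>j. j < B \<Longrightarrow> j \<noteq> k \<Longrightarrow> x j = x' j \<and> y j = y' j"
    using kset by auto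
  define Q where "Q = (\<lambda>f. pn a (M1.g f) * \<bar>detd (M1.g' f)\<bar>)"
  define Q' where "Q' = (\<lambda>f. pn a (M2.g f) * \<bar>detd (M2.g' f)\<bar>)"
  have bound: "Q f \<le> exp \<alpha> * Q' f" and Q'pos: "Q' f > 0" for f
  proof -
    have MkE: "M1.Mk k f = M2.Mk k f"
      unfolding M1.Mk_def[abs_def] M2.Mk_def[abs_def] M1.N_def M2.N_def
      by (intro ext arg_cong2[where f="(+)"] sum.cong refl) (use same in auto)
    have G1: "M1.g' f = (\<lambda>v. (-1) *\<^sub>R (M1.Mk k f v + (L2 (y k * (f \<bullet> x k)) * (x k \<bullet> v)) *\<^sub>R x k))"
      using M1.g'_struct[OF k] by (intro ext) blast
    have G2: "M2.g' f = (\<lambda>v. (-1) *\<^sub>R (M1.Mk k f v + (L2 (y' k * (f \<bullet> x' k)) * (x' k \<bullet> v)) *\<^sub>R x' k))"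
      using M2.g'_struct[OF k] MkE by (intro ext) simp
    define lam0 where "lam0 = real B / CR * M1.\<kappa>"
    have lam0: "lam0 > 0" unfolding lam0_def using M1.kappa_pos CR_pos B_pos by simp
    have pd: "\<And>v. lam0 * (norm v)\<^sup>2 \<le> v \<bullet> M1.Mk k f v" unfolding lam0_def by (rule M1.Mk_pd)
    have nxk: "norm (x k) \<le> 1" using data k by blast
    note DR = detd_ratio[OF M1.Mk_linear pd lam0 _ _ _ nxk, of "L2 (y k * (f \<bullet> x k))" c1
        "L2 (y' k * (f \<bullet> x' k))" "-1" "x' k"]
    have dne: "detd (M2.g' f) \<noteq> 0" unfolding G2 using DR(1) L2b by simp
    have dle: "\<bar>detd (M1.g' f)\<bar> \<le> (1 + c1 / lam0) * \<bar>detd (M2.g' f)\<bar>"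
      unfolding G1 G2 using DR(2) L2b by simp
    have gdiff: "norm (M1.g f - M2.g f) \<le> 2"
    proof -
      define T1 where "T1 = (\<lambda>j. (L1 (y j * (f \<bullet> x j)) * y j) *\<^sub>R x j)"
      define T2 where "T2 = (\<lambda>j. (L1 (y' j * (f \<bullet> x' j)) * y' j) *\<^sub>R x' j)"
      have s: "(\<Sum>j<B. T1 j) - (\<Sum>j<B. T2 j) = T1 k - T2 k"
      proof -
        have "(\<Sum>j\<in>{..<B}-{k}. T1 j) = (\<Sum>j\<in>{..<B}-{k}. T2 j)"
          by (rule sum.cong) (use same in \<open>auto simp: T1_def T2_def\<close>)
        then show ?thesis using k by (simp add: sum.remove[of "{..<B}" k])
      qed
      have "M1.Hd f - M2.Hd f = (CR / real B) *\<^sub>R ((\<Sum>j<B. T1 j) - (\<Sum>j<B. T2 j))"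
        by (simp add: M1.Hd_def M2.Hd_def M1.cc_def M2.cc_def T1_def T2_def scaleR_diff_right)
      then have h: "M1.Hd f - M2.Hd f = (CR / real B) *\<^sub>R (T1 k - T2 k)" unfolding s .
      have "M1.g f - M2.g f = (- (real B / CR)) *\<^sub>R (M1.Hd f - M2.Hd f)"
        by (simp add: M1.g_def M2.g_def scaleR_diff_right)
      also have "\<dots> = (- (real B / CR)) *\<^sub>R ((CR / real B) *\<^sub>R (T1 k - T2 k))" unfolding h ..
      also have "\<dots> = - (T1 k - T2 k)" using CR_pos B_pos by simp
      finally have "M1.g f - M2.g f = - (T1 k - T2 k)" .
      then have "norm (M1.g f - M2.g f) \<le> norm (T1 k) + norm (T2 k)"
        by (metis add.commute norm_minus_cancel norm_triangle_ineq4)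
      moreover have "norm (T1 k) \<le> 1"
      proof -
        have "\<bar>y k\<bar> = 1" using data k by auto
        then show ?thesis unfolding T1_def using L1b[of "y k * (f \<bullet> x k)"] nxk
          by (simp add: abs_mult) (metis mult_le_one abs_ge_zero norm_ge_zero)
      qed
      moreover have "norm (T2 k) \<le> 1"
      proof -
        have "\<bar>y' k\<bar> = 1" "norm (x' k) \<le> 1" using data' k by auto
        then show ?thesis unfolding T2_def using L1b[of "y' k * (f \<bullet> x' k)"]
          by (simp add: abs_mult) (metis mult_le_one abs_ge_zero norm_ge_zero)
      qed
      ultimately show ?thesis by linarith
    qed
    have pr: "pn a (M1.g f) \<le> exp a * pn a (M2.g f)" by (rule pn_ratio[OF apos gdiff])
    have p2: "pn a (M2.g f) > 0" by (rule pn_pos[OF apos])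
    show "Q' f > 0" unfolding Q'_def using p2 dne by simp
    have c1l: "c1 / lam0 = c1 * CR / (real B * (\<rho> + \<Phi> + 2 * \<eta> * real (card Np)))"
      unfolding lam0_def M1.\<kappa>_def M1.N_def using CR_pos by (simp add: field_simps)
    have "Q f \<le> (exp a * pn a (M2.g f)) * ((1 + c1 / lam0) * \<bar>detd (M2.g' f)\<bar>)"
      unfolding Q_def using pr dle p2 by (intro mult_mono) auto
    also have "\<dots> = (exp a * (1 + c1 / lam0)) * Q' f" unfolding Q'_def by (simp add: mult_ac)
    also have "\<dots> \<le> exp \<alpha> * Q' f"
      using num(3) unfolding c1l[symmetric] using p2 by (intro mult_right_mono) (auto simp: Q'_def)
    finally show "Q f \<le> exp \<alpha> * Q' f" .
  qed
  show ?thesis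
  proof (rule exI[of _ Q], rule exI[of _ Q'], intro conjI allI)
    show "Q \<in> borel_measurable lborel" unfolding Q_def by measurable
    show "Q' \<in> borel_measurable lborel" unfolding Q'_def by measurable
    show "output_distribution L R c1 \<alpha> CR B \<rho> \<eta> Np lam fp fn x y = density lborel (\<lambda>f. ennreal (Q f))"
      unfolding od1 Q_def ..
    show "output_distribution L R c1 \<alpha> CR B \<rho> \<eta> Np lam fp fn x' y' = density lborel (\<lambda>f. ennreal (Q' f))"
      unfolding od2 Q'_def ..
    fix f
    show "0 \<le> Q f" unfolding Q_def using pn_pos[OF apos, of "M1.g f"] by (intro mult_nonneg_nonneg) auto
    show "0 < Q' f" by (rule Q'pos)
    show "Q f / Q' f \<le> exp \<alpha>" using bound[of f] Q'pos[of f] by (simp add: divide_le_eq)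
  qed
qed

end
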